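(* Let $p>5$ be a prime, $q=p^h$, and let $\mathcal{F}$ be the projective closure of the affine curve $ax^n+by^m=1$ defined over $\mathbb{F}_q$, where $a,b\in\mathbb{F}_q^*$ and $m,n$ are positive integers with $n\ge m>2$ and $p\nmid mn$. Then $\mathcal{F}$ is nonclassical with respect to the linear system $\Sigma_2$ of conics if and only if one of the following holds: (a) $p\mid (m-2)$ and $p\mid (n-2)$; (b) $p\mid (m+1)$ and $p\mid (n+1)$; (c) $p\mid (2m-1)$ and $p\mid (2n-1)$; (d) $p\mid (m-1)$ and $p\mid (n-1)(n-2)(2n-1)(n+1)$; (e) $p\mid (n-1)$ and $p\mid (m+1)(m-2)(2m-1)$.
   Context: For a geometrically irreducible projective plane curve $\mathcal{F}$ over $\mathbb{F}_q$ with function field $\overline{\mathbb{F}}_q(\mathcal{F})=\overline{\mathbb{F}}_q(x,y)$ and an integer $s\ge1$, let $\Sigma_s$ be the linear system of plane curves of degree $s$, $M=\binom{s+2}{2}-1$, and $\varphi_0,\dots,\varphi_M$ the monomials of degree $s$ in $x,y,1$. For a separating element $\tau$ and Hasse derivatives $D^{(k)}_\tau$, the order sequence $\varepsilon_0<\dots<\varepsilon_M$ of $\mathcal{F}$ with respect to $\Sigma_s$ is the lexicographically smallest sequence of nonnegative integers with $\det(D_\tau^{(\varepsilon_i)}\varphi_j)_{i,j=0}^M\neq0$. $\mathcal{F}$ is classical with respect to $\Sigma_s$ if $\varepsilon_i=i$ for all $i$, and nonclassical otherwise. $\Sigma_2$ is the system of conics. *)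

theory Defs
  imports "Jordan_Normal_Form.Determinant" "HOL-Computational_Algebra.Polynomial"
begin

text \<open>All objects live inside one ambient field 'K, which plays the role of the
function field of the curve; the constant field is a subset k of 'K.\<close>

definition subfield :: "'K::field set \<Rightarrow> bool" where
  "subfield F \<longleftrightarrow> 0 \<in> F \<and> 1 \<in> F \<and> (\<forall>u\<in>F. \<forall>v\<in>F. u + v \<in> F \<and> u * v \<in> F)
     \<and> (\<forall>u\<in>F. - u \<in> F \<and> inverse u \<in> F)"

definition field_generated :: "'K::field set \<Rightarrow> 'K set" where
  "field_generated S = \<Inter>{F. S \<subseteq> F \<and> subfield F}"

definition algebraically_closed_subfield :: "'K::field set \<Rightarrow> bool" where
  "algebraically_closed_subfield k \<longleftrightarrow> subfield k \<and>
     (\<forall>f :: 'K poly. set (coeffs f) \<subseteq> k \<longrightarrow> degree f \<ge> 1 \<longrightarrow> (\<exists>r\<in>k. poly f r = 0))"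

definition transcendental_over :: "'K::field set \<Rightarrow> 'K \<Rightarrow> bool" where
  "transcendental_over k t \<longleftrightarrow>
     (\<forall>f :: 'K poly. set (coeffs f) \<subseteq> k \<longrightarrow> f \<noteq> 0 \<longrightarrow> poly f t \<noteq> 0)"

text \<open>Hasse derivatives D i = D^{(i)}_\<tau> with respect to \<tau> on the function field,
  trivial on the constant field k (iterative Hasse--Schmidt derivation).\<close>
definition hasse_derivatives :: "'K::field set \<Rightarrow> 'K \<Rightarrow> (nat \<Rightarrow> 'K \<Rightarrow> 'K) \<Rightarrow> bool" where
  "hasse_derivatives k \<tau> D \<longleftrightarrow>
     (\<forall>f. D 0 f = f) \<and>
     (\<forall>i f g. D i (f + g) = D i f + D i g) \<and>
     (\<forall>i f g. D i (f * g) = (\<Sum>j\<le>i. D j f * D (i - j) g)) \<and>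
     (\<forall>i j f. D i (D j f) = of_nat ((i + j) choose i) * D (i + j) f) \<and>
     (\<forall>i\<ge>1. \<forall>c\<in>k. D i c = 0) \<and>
     D 1 \<tau> = 1 \<and> (\<forall>i\<ge>2. D i \<tau> = 0)"

text \<open>The monomials of degree s in x, y, 1 (dehomogenised): x^i y^j with i + j \<le> s.
  Their number is M + 1 = (s+2 choose 2).\<close>
definition monomials :: "nat \<Rightarrow> 'K::field \<Rightarrow> 'K \<Rightarrow> 'K list" where
  "monomials s x y = [x ^ i * y ^ j. i \<leftarrow> [0..<s+1], j \<leftarrow> [0..<s+1-i]]"

definition hasse_matrix :: "(nat \<Rightarrow> 'K::field \<Rightarrow> 'K) \<Rightarrow> 'K list \<Rightarrow> nat list \<Rightarrow> 'K mat" where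
  "hasse_matrix D \<phi> \<epsilon> = mat (length \<phi>) (length \<phi>) (\<lambda>(i, j). D (\<epsilon> ! i) (\<phi> ! j))"

definition admissible_orders :: "(nat \<Rightarrow> 'K::field \<Rightarrow> 'K) \<Rightarrow> 'K list \<Rightarrow> nat list set" where
  "admissible_orders D \<phi> = {\<epsilon>. length \<epsilon> = length \<phi> \<and> sorted_wrt (<) \<epsilon> \<and>
      det (hasse_matrix D \<phi> \<epsilon>) \<noteq> 0}"

definition is_order_sequence :: "(nat \<Rightarrow> 'K::field \<Rightarrow> 'K) \<Rightarrow> 'K list \<Rightarrow> nat list \<Rightarrow> bool" where
  "is_order_sequence D \<phi> \<epsilon> \<longleftrightarrow> \<epsilon> \<in> admissible_orders D \<phi> \<and>
     (\<forall>\<epsilon>'\<in>admissible_orders D \<phi>. \<epsilon>' = \<epsilon> \<or> (\<epsilon>, \<epsilon>') \<in> lexord {(u, v). u < v})"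

definition classical :: "(nat \<Rightarrow> 'K::field \<Rightarrow> 'K) \<Rightarrow> 'K list \<Rightarrow> bool" where
  "classical D \<phi> \<longleftrightarrow> is_order_sequence D \<phi> [0..<length \<phi>]"

definition nonclassical :: "(nat \<Rightarrow> 'K::field \<Rightarrow> 'K) \<Rightarrow> 'K list \<Rightarrow> bool" where
  "nonclassical D \<phi> \<longleftrightarrow> \<not> classical D \<phi>"

end

theory Submission
  imports Defs
begin

lemma subfield_of_nat: "subfield k \<Longrightarrow> of_nat n \<in> k"
  by (induction n) (auto simp: subfield_def)
lemma subfield_add: "subfield k \<Longrightarrow> a \<in> k \<Longrightarrow> b \<in> k \<Longrightarrow> a + b \<in> k"
  by (auto simp: subfield_def)
lemma subfield_mult: "subfield k \<Longrightarrow> a \<in> k \<Longrightarrow> b \<in> k \<Longrightarrow> a * b \<in> k"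
  by (auto simp: subfield_def)
lemma subfield_uminus: "subfield k \<Longrightarrow> a \<in> k \<Longrightarrow> - a \<in> k"
  by (auto simp: subfield_def)
lemma subfield_diff: "subfield k \<Longrightarrow> a \<in> k \<Longrightarrow> b \<in> k \<Longrightarrow> a - b \<in> k"
  using subfield_add[of k a "-b"] subfield_uminus[of k b] by simp
lemma subfield_power: "subfield k \<Longrightarrow> a \<in> k \<Longrightarrow> a ^ n \<in> k"
  by (induction n) (auto simp: subfield_def)
lemma subfield_numeral: "subfield k \<Longrightarrow> numeral w \<in> k"
  using subfield_of_nat[of k "numeral w"] by simp
lemma subfield_one: "subfield k \<Longrightarrow> 1 \<in> k"
  by (auto simp: subfield_def)
lemma subfield_zero: "subfield k \<Longrightarrow> 0 \<in> k"
  by (auto simp: subfield_def)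
lemma subfield_inverse: "subfield k \<Longrightarrow> a \<in> k \<Longrightarrow> inverse a \<in> k"
  by (auto simp: subfield_def)
lemma subfield_divide: "subfield k \<Longrightarrow> a \<in> k \<Longrightarrow> b \<in> k \<Longrightarrow> a / b \<in> k"
  by (simp add: divide_inverse subfield_mult subfield_inverse)

lemmas subfield_closed = subfield_of_nat subfield_add subfield_mult subfield_uminus subfield_diff
  subfield_power subfield_numeral subfield_one subfield_zero subfield_inverse subfield_divide

locale derivation =
  fixes k :: "'K::field set" and d :: "'K \<Rightarrow> 'K"
  assumes sub: "subfield k"
  and d_add: "d (f + g) = d f + d g"
  and d_mult: "d (f * g) = f * d g + d f * g"
  and d_const: "c \<in> k \<Longrightarrow> d c = 0"
begin

lemma d_zero[simp]: "d 0 = 0"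
  using d_const subfield_zero[OF sub] by simp
lemma d_one[simp]: "d 1 = 0"
  using d_const subfield_one[OF sub] by simp
lemma d_of_nat[simp]: "d (of_nat n) = 0"
  using d_const subfield_of_nat[OF sub] by simp
lemma d_numeral[simp]: "d (numeral w) = 0"
  using d_const subfield_numeral[OF sub] by simp
lemma d_uminus: "d (- f) = - d f"
proof -
  have "d f + d (-f) = 0" using d_add[of f "-f"] by simp
  thus ?thesis by (metis add.commute eq_neg_iff_add_eq_0)
qed
lemma d_diff: "d (f - g) = d f - d g"
  using d_add[of f "-g"] d_uminus[of g] by simp
lemma d_power: "d (f ^ n) = of_nat n * f ^ (n - 1) * d f"
proof (induction n)
  case 0 thus ?case by simp
next
  case (Suc n)
  show ?case
  proof (cases n)
    case 0 thus ?thesis by simp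
  next
    case (Suc n')
    have "d (f ^ Suc n) = f * d (f^n) + d f * f ^ n" by (simp add: d_mult)
    also have "\<dots> = of_nat (Suc n) * f ^ n * d f" using Suc.IH Suc by (simp add: algebra_simps)
    finally show ?thesis by simp
  qed
qed
lemma d_cmult: "c \<in> k \<Longrightarrow> d (c * f) = c * d f"
  by (simp add: d_mult d_const)
lemma d_inverse: "f \<noteq> 0 \<Longrightarrow> d (inverse f) = - d f / f^2"
proof -
  assume f: "f \<noteq> 0"
  have "0 = d (f * inverse f)" using f by simp
  also have "\<dots> = f * d (inverse f) + d f * inverse f" by (rule d_mult)
  finally have "f * d (inverse f) + d f * inverse f = 0" by simp
  hence "f * d (inverse f) = - (d f * inverse f)" by (metis add.commute eq_neg_iff_add_eq_0)
  hence "d (inverse f) = - (d f * inverse f) / f" using f by (simp add: field_simps)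
  thus ?thesis using f by (simp add: field_simps power2_eq_square)
qed
lemma d_divide: "g \<noteq> 0 \<Longrightarrow> d (f / g) = (d f * g - f * d g) / g^2"
proof -
  assume g: "g \<noteq> 0"
  have "d (f / g) = d (f * inverse g)" by (simp add: divide_inverse)
  also have "\<dots> = f * (- d g / g^2) + d f * inverse g" by (simp only: d_mult d_inverse[OF g])
  also have "\<dots> = (d f * g - f * d g) / g^2" using g by (simp add: field_simps power2_eq_square)
  finally show ?thesis .
qed
lemma d_funpow_const: "c \<in> k \<Longrightarrow> (d ^^ Suc i) c = 0"
proof (induction i)
  case 0 thus ?case by (simp add: d_const)
next
  case (Suc i) thus ?case by simp
qed
lemma d_funpow_zero[simp]: "(d ^^ i) 0 = 0"
  by (induction i) auto
lemma d_sum: "d (\<Sum>j\<in>A. f j) = (\<Sum>j\<in>A. d (f j))"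
  by (induction A rule: infinite_finite_induct) (auto simp: d_add)

end


lemma det_single_col:
  fixes A :: "'a::comm_ring_1 mat"
  assumes A: "A \<in> carrier_mat (Suc n) (Suc n)" and j: "j < Suc n" and i: "i < Suc n"
  and z: "\<And>i'. i' < Suc n \<Longrightarrow> i' \<noteq> i \<Longrightarrow> A $$ (i', j) = 0"
  shows "det A = A $$ (i, j) * cofactor A i j"
proof -
  have "det A = (\<Sum>i'<Suc n. A $$ (i',j) * cofactor A i' j)"
    by (rule laplace_expansion_column[OF A j])
  also have "\<dots> = (\<Sum>i'\<in>{i}. A $$ (i',j) * cofactor A i' j)"
    by (rule sum.mono_neutral_right) (use i z in auto)
  finally show ?thesis by simp
qed

lemma mat_delete_mat:
  "mat_delete (mat n n f) i j =
   mat (n - 1) (n - 1) (\<lambda>(i', j'). f (if i' < i then i' else Suc i', if j' < j then j' else Suc j'))"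
  unfolding mat_delete_def by (rule eq_matI) auto

lemma det_mat_Suc:
  "det (mat (Suc n) (Suc n) f :: 'a::comm_ring_1 mat) =
   (\<Sum>i<Suc n. f (i, 0) * ((-1) ^ i * det (mat n n (\<lambda>(i', j'). f (if i' < i then i' else Suc i', Suc j')))))"
proof -
  have "det (mat (Suc n) (Suc n) f) = (\<Sum>i<Suc n. mat (Suc n) (Suc n) f $$ (i,0) * cofactor (mat (Suc n) (Suc n) f) i 0)"
    by (rule laplace_expansion_column) auto
  also have "\<dots> = (\<Sum>i<Suc n. f (i, 0) * ((-1) ^ i * det (mat n n (\<lambda>(i', j'). f (if i' < i then i' else Suc i', Suc j')))))"
    by (rule sum.cong) (auto simp: cofactor_def mat_delete_mat)
  finally show ?thesis .
qed

lemma det3: "det (mat 3 3 f :: 'a::comm_ring_1 mat) =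
   f (0,0) * (f (1,1) * f (2,2) - f (1,2) * f (2,1))
 - f (1,0) * (f (0,1) * f (2,2) - f (0,2) * f (2,1))
 + f (2,0) * (f (0,1) * f (1,2) - f (0,2) * f (1,1))"
proof -
  have e: "(3::nat) = Suc (Suc (Suc 0))" by simp
  show ?thesis unfolding e det_mat_Suc by (simp add: algebra_simps numeral_2_eq_2)
qed

context derivation begin

lemma funpow_x: "d x = 1 \<Longrightarrow> (d ^^ Suc (Suc i)) x = 0"
  by (simp add: funpow_Suc_right d_funpow_const subfield_one[OF sub] del: funpow.simps)

lemma funpow_xy: "d x = 1 \<Longrightarrow> (d ^^ Suc i) (x * y) = x * (d ^^ Suc i) y + of_nat (Suc i) * (d ^^ i) y"
proof (induction i)
  case 0 thus ?case by (simp add: d_mult)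
next
  case (Suc i)
  have "(d ^^ Suc (Suc i)) (x * y) = d ((d ^^ Suc i) (x * y))" by simp
  also have "\<dots> = d (x * (d ^^ Suc i) y + of_nat (Suc i) * (d ^^ i) y)" using Suc by simp
  also have "\<dots> = x * (d ^^ Suc (Suc i)) y + of_nat (Suc (Suc i)) * (d ^^ Suc i) y"
    using Suc.prems by (simp add: d_add d_mult algebra_simps)
  finally show ?case .
qed

lemma det_Dmat6:
  assumes dx: "d x = 1"
  shows "det (mat 6 6 (\<lambda>(i, j). (d ^^ i) ([1, y, y^2, x, x*y, x^2] ! j))) =
    4 * (d ^^ 2) y * (9 * ((d ^^ 2) y)^2 * (d ^^ 5) y - 45 * (d ^^ 2) y * (d ^^ 3) y * (d ^^ 4) y
      + 40 * ((d ^^ 3) y)^3)"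
proof -
  define Y where "Y i = (d ^^ i) y" for i
  have Ys: "d (Y i) = Y (Suc i)" for i unfolding Y_def by simp
  have dy: "d y = Y (Suc 0)" unfolding Y_def by simp
  have c1: "i \<noteq> 0 \<Longrightarrow> (d ^^ i) 1 = 0" for i
    using d_funpow_const subfield_one[OF sub] by (cases i) auto
  have x2: "(d ^^ Suc (Suc i)) x = 0" for i using funpow_x[OF dx] by blast
  have x2': "0 < i \<Longrightarrow> d ((d ^^ i) x) = 0" for i
    using x2 by (cases i) auto
  have xx1: "d (x^2) = 2 * x" using dx by (simp add: d_power)
  have xx2: "(d ^^ 2) (x^2) = 2"
    using dx xx1 by (simp add: numeral_2_eq_2 d_mult)
  have xx2': "d (d (x^2)) = 2" using xx2 by (simp add: numeral_2_eq_2)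
  have xx3: "(d ^^ Suc (Suc (Suc i))) (x^2) = 0" for i
  proof -
    have e: "Suc (Suc (Suc i)) = Suc i + 2" by simp
    have "(d ^^ Suc (Suc (Suc i))) (x^2) = (d ^^ Suc i) ((d ^^ 2) (x^2))"
      by (simp only: e funpow_add comp_def)
    thus ?thesis using xx2 d_funpow_const subfield_numeral[OF sub] by simp
  qed
  have xx3': "0 < i \<Longrightarrow> d (d ((d ^^ i) (x^2))) = 0" for i
  proof -
    assume "0 < i"
    then obtain i' where i: "i = Suc i'" by (cases i) auto
    have "d (d ((d ^^ i) (x^2))) = (d ^^ i) (d (d (x^2)))" by (simp add: funpow_swap1)
    also have "\<dots> = 0" unfolding xx2' i using d_funpow_const subfield_numeral[OF sub] by blast
    finally show ?thesis .
  qed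
  have xy: "(d ^^ Suc i) (x * y) = x * Y (Suc i) + of_nat (Suc i) * Y i" for i
    using funpow_xy[OF dx] unfolding Y_def by blast
  have z3: "(d ^^ 3) (y^2) = 6 * Y 1 * Y 2 + 2 * y * Y 3"
    by (simp add: eval_nat_numeral d_add d_mult d_power dy Ys algebra_simps)
  have z4: "(d ^^ 4) (y^2) = 6 * (Y 2)^2 + 8 * Y 1 * Y 3 + 2 * y * Y 4"
    by (simp add: eval_nat_numeral d_add d_mult d_power dy Ys algebra_simps)
  have z5: "(d ^^ 5) (y^2) = 20 * Y 2 * Y 3 + 10 * Y 1 * Y 4 + 2 * y * Y 5"
    by (simp add: eval_nat_numeral d_add d_mult d_power dy Ys algebra_simps)
  let ?M = "mat 6 6 (\<lambda>(i, j). (d ^^ i) ([1, y, y^2, x, x*y, x^2] ! j))"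
  define M1 where "M1 = mat_delete ?M 0 0"
  define M2 where "M2 = mat_delete M1 0 2"
  define M3 where "M3 = mat_delete M2 0 3"
  have M1: "M1 = mat 5 5 (\<lambda>(i, j). (d ^^ Suc i) ([y, y^2, x, x*y, x^2] ! j))"
    unfolding M1_def mat_delete_mat by (rule eq_matI) auto
  have M2: "M2 = mat 4 4 (\<lambda>(i, j). (d ^^ Suc (Suc i)) ([y, y^2, x*y, x^2] ! j))"
    unfolding M2_def M1 mat_delete_mat by (rule eq_matI) (auto simp: nth_Cons')
  have M3: "M3 = mat 3 3 (\<lambda>(i, j). (d ^^ Suc (Suc (Suc i))) ([y, y^2, x*y] ! j))"
    unfolding M3_def M2 mat_delete_mat by (rule eq_matI) (auto simp: nth_Cons')
  have "det ?M = ?M $$ (0, 0) * cofactor ?M 0 0"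
    by (rule det_single_col[where n=5]) (auto simp: c1)
  also have "\<dots> = det M1" by (simp add: cofactor_def M1_def)
  also have "det M1 = M1 $$ (0, 2) * cofactor M1 0 2"
    unfolding M1 by (rule det_single_col[where n=4]) (auto simp: x2' nth_Cons')
  also have "\<dots> = det M2" by (simp add: cofactor_def M2_def M1 dx)
  also have "det M2 = M2 $$ (0, 3) * cofactor M2 0 3"
    unfolding M2 by (rule det_single_col[where n=3]) (auto simp: xx3' nth_Cons')
  also have "\<dots> = - 2 * det M3" by (simp add: cofactor_def M3_def M2 xx2')
  also have "det M3 = - 2 * Y 2 * (9 * (Y 2)^2 * Y 5 - 45 * Y 2 * Y 3 * Y 4 + 40 * (Y 3)^3)"
    unfolding M3 det3 using xy[of 2] xy[of 3] xy[of 4] z3 z4 z5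
    by (simp add: Y_def eval_nat_numeral algebra_simps)
  finally show ?thesis unfolding Y_def by simp
qed

end

lemma upt_lexord_aux:
  "sorted_wrt (<) e \<Longrightarrow> (\<forall>v\<in>set e. c \<le> v) \<Longrightarrow> e \<noteq> [c..<c + length e] \<Longrightarrow>
   ([c..<c + length e], e) \<in> lexord {(u, v). u < v}"
proof (induction e arbitrary: c)
  case Nil thus ?case by simp
next
  case (Cons h r)
  have hc: "c \<le> h" using Cons.prems(2) by simp
  have up: "[c..<c + length (h # r)] = c # [Suc c..<Suc c + length r]"
    by (simp add: upt_rec)
  show ?case
  proof (cases "h = c")
    case True
    have "r \<noteq> [Suc c..<Suc c + length r]" using Cons.prems(3) True up by simp
    moreover have "\<forall>v\<in>set r. Suc c \<le> v" using Cons.prems(1) True by auto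
    moreover have "sorted_wrt (<) r" using Cons.prems(1) by simp
    ultimately have "([Suc c..<Suc c + length r], r) \<in> lexord {(u, v). u < v}"
      using Cons.IH by blast
    thus ?thesis using up True by simp
  next
    case False
    thus ?thesis using up hc by simp
  qed
qed

lemma classical_iff:
  fixes D :: "nat \<Rightarrow> 'K::field \<Rightarrow> 'K"
  shows "classical D \<phi> \<longleftrightarrow> det (hasse_matrix D \<phi> [0..<length \<phi>]) \<noteq> 0"
proof
  assume "classical D \<phi>"
  thus "det (hasse_matrix D \<phi> [0..<length \<phi>]) \<noteq> 0"
    unfolding classical_def is_order_sequence_def admissible_orders_def by simp
next
  assume H: "det (hasse_matrix D \<phi> [0..<length \<phi>]) \<noteq> 0"
  have adm: "[0..<length \<phi>] \<in> admissible_orders D \<phi>"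
    using H unfolding admissible_orders_def by (simp add: sorted_wrt_upt)
  have "\<forall>e'\<in>admissible_orders D \<phi>. e' = [0..<length \<phi>] \<or> ([0..<length \<phi>], e') \<in> lexord {(u, v). u < v}"
  proof
    fix e' assume "e' \<in> admissible_orders D \<phi>"
    hence e': "length e' = length \<phi>" "sorted_wrt (<) e'" unfolding admissible_orders_def by auto
    show "e' = [0..<length \<phi>] \<or> ([0..<length \<phi>], e') \<in> lexord {(u, v). u < v}"
      using upt_lexord_aux[of e' 0] e' by auto
  qed
  thus "classical D \<phi>" using adm unfolding classical_def is_order_sequence_def by simp
qed

primrec cc :: "'K::field \<Rightarrow> ('K \<Rightarrow> 'K) \<Rightarrow> nat \<Rightarrow> nat \<Rightarrow> 'K" where
  "cc U d 0 j = (if j = 0 then 1 else 0)"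
| "cc U d (Suc i) j = U * (d (cc U d i j) + (if j = 0 then 0 else cc U d i (j - 1)))"

lemma cc_above: "d 0 = 0 \<Longrightarrow> i < j \<Longrightarrow> cc U d i j = 0"
  by (induction i arbitrary: j) auto

lemma cc_diag: "d 0 = 0 \<Longrightarrow> cc U d i i = U ^ i"
  by (induction i) (auto simp: cc_above)

lemma cc_expand:
  assumes d0: "d 0 = 0" and dadd: "\<And>f g. d (f + g) = d f + d g"
    and dmult: "\<And>f g. d (f * g) = f * d g + d f * g"
    and dl: "\<And>f. dl f = U * d f"
  shows "(dl ^^ i) f = (\<Sum>j<Suc i. cc U d i j * (d ^^ j) f)"
proof (induction i)
  case 0 thus ?case by simp
next
  case (Suc i)
  have dlsum: "dl (\<Sum>j\<in>A. g j) = (\<Sum>j\<in>A. dl (g j))" for A and g :: "nat \<Rightarrow> _"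
    unfolding dl by (induction A rule: infinite_finite_induct) (auto simp: dadd d0 distrib_left)
  have "(dl ^^ Suc i) f = dl (\<Sum>j<Suc i. cc U d i j * (d ^^ j) f)" using Suc by simp
  also have "\<dots> = (\<Sum>j<Suc i. U * d (cc U d i j) * (d ^^ j) f + U * cc U d i j * (d ^^ Suc j) f)"
    unfolding dlsum by (simp add: dl dmult algebra_simps)
  also have "\<dots> = (\<Sum>j<Suc i. U * d (cc U d i j) * (d ^^ j) f) + (\<Sum>j<Suc i. U * cc U d i j * (d ^^ Suc j) f)"
    by (simp add: sum.distrib)
  also have "(\<Sum>j<Suc i. U * d (cc U d i j) * (d ^^ j) f) = (\<Sum>j<Suc (Suc i). U * d (cc U d i j) * (d ^^ j) f)"
    using cc_above[where d=d, OF d0, of i "Suc i" U] d0 by simp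
  also have "(\<Sum>j<Suc i. U * cc U d i j * (d ^^ Suc j) f) = (\<Sum>j<Suc (Suc i). U * (if j = 0 then 0 else cc U d i (j - 1)) * (d ^^ j) f)"
    by (subst sum.lessThan_Suc_shift) simp
  also have "(\<Sum>j<Suc (Suc i). U * d (cc U d i j) * (d ^^ j) f) + \<dots> = (\<Sum>j<Suc (Suc i). cc U d (Suc i) j * (d ^^ j) f)"
    by (simp add: sum.distrib[symmetric] algebra_simps split del: if_split)
  finally show ?case .
qed

definition Cmat :: "'K::field \<Rightarrow> ('K \<Rightarrow> 'K) \<Rightarrow> nat \<Rightarrow> 'K mat" where
  "Cmat U d L = mat L L (\<lambda>(i, j). cc U d i j / of_nat (fact i))"
definition Dmat :: "('K::field \<Rightarrow> 'K) \<Rightarrow> 'K list \<Rightarrow> 'K mat" where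
  "Dmat d \<phi> = mat (length \<phi>) (length \<phi>) (\<lambda>(i, j). (d ^^ i) (\<phi> ! j))"

lemma hasse_factor:
  assumes d0: "d 0 = 0" and dadd: "\<And>f g. d (f + g) = d f + d g"
    and dmult: "\<And>f g. d (f * g) = f * d g + d f * g"
    and dl: "\<And>f. dl f = U * d f"
    and DH: "\<And>i f. i < length \<phi> \<Longrightarrow> D i f = (dl ^^ i) f / of_nat (fact i)"
  shows "hasse_matrix D \<phi> [0..<length \<phi>] = Cmat U d (length \<phi>) * Dmat d \<phi>"
proof (rule eq_matI)
  let ?L = "length \<phi>"
  fix i j assume i: "i < dim_row (Cmat U d ?L * Dmat d \<phi>)" and j: "j < dim_col (Cmat U d ?L * Dmat d \<phi>)"
  hence i: "i < ?L" and j: "j < ?L" by (auto simp: Cmat_def Dmat_def)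
  have "(Cmat U d ?L * Dmat d \<phi>) $$ (i, j) = (\<Sum>l\<in>{0..<?L}. cc U d i l / of_nat (fact i) * (d ^^ l) (\<phi> ! j))"
    using i j by (simp add: Cmat_def Dmat_def scalar_prod_def)
  also have "\<dots> = (\<Sum>l\<in>{..<Suc i}. cc U d i l / of_nat (fact i) * (d ^^ l) (\<phi> ! j))"
    by (rule sum.mono_neutral_right) (use i cc_above[where d=d, OF d0] in auto)
  also have "\<dots> = (\<Sum>l<Suc i. cc U d i l * (d ^^ l) (\<phi> ! j)) / of_nat (fact i)"
    by (simp only: sum_divide_distrib times_divide_eq_left)
  also have "\<dots> = D i (\<phi> ! j)"
    using DH[OF i] cc_expand[where d=d and dl=dl, OF d0 dadd dmult dl] by simp
  finally show "hasse_matrix D \<phi> [0..<length \<phi>] $$ (i, j) = (Cmat U d ?L * Dmat d \<phi>) $$ (i, j)"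
    using i j by (simp add: hasse_matrix_def)
next
  show "dim_row (hasse_matrix D \<phi> [0..<length \<phi>]) = dim_row (Cmat U d (length \<phi>) * Dmat d \<phi>)"
    by (simp add: hasse_matrix_def Cmat_def)
  show "dim_col (hasse_matrix D \<phi> [0..<length \<phi>]) = dim_col (Cmat U d (length \<phi>) * Dmat d \<phi>)"
    by (simp add: hasse_matrix_def Dmat_def)
qed

lemma det_Cmat:
  fixes U :: "'K::field"
  assumes d0: "d 0 = 0" and U: "U \<noteq> 0" and F: "\<And>i. i < L \<Longrightarrow> (of_nat (fact i) :: 'K::field) \<noteq> 0"
  shows "det (Cmat U d L) \<noteq> 0"
proof -
  have "det (Cmat U d L) = prod_list (diag_mat (Cmat U d L))"
    by (rule det_lower_triangular[of L]) (auto simp: Cmat_def cc_above[where d=d, OF d0])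
  also have "\<dots> = (\<Prod>i = 0..<L. U ^ i / of_nat (fact i))"
    by (simp add: prod_list_diag_prod Cmat_def cc_diag[where d=d, OF d0])
  also have "\<dots> \<noteq> 0"
  proof -
    have "\<forall>i\<in>{0..<L}. U ^ i / of_nat (fact i) \<noteq> 0" using U F by simp
    thus ?thesis by (simp only: prod_zero_iff finite_atLeastLessThan) blast
  qed
  finally show ?thesis .
qed

lemma classical_iff_Dmat:
  fixes U :: "'K::field"
  assumes d0: "d 0 = 0" and dadd: "\<And>f g. d (f + g) = d f + d g"
    and dmult: "\<And>f g. d (f * g) = f * d g + d f * g"
    and dl: "\<And>f. dl f = U * d f" and U: "U \<noteq> 0"
    and DH: "\<And>i f. i < length \<phi> \<Longrightarrow> D i f = (dl ^^ i) f / of_nat (fact i)"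
    and F: "\<And>i. i < length \<phi> \<Longrightarrow> (of_nat (fact i) :: 'K::field) \<noteq> 0"
  shows "classical D \<phi> \<longleftrightarrow> det (Dmat d \<phi>) \<noteq> 0"
proof -
  have "det (hasse_matrix D \<phi> [0..<length \<phi>]) = det (Cmat U d (length \<phi>)) * det (Dmat d \<phi>)"
  proof -
    have "hasse_matrix D \<phi> [0..<length \<phi>] = Cmat U d (length \<phi>) * Dmat d \<phi>"
      by (rule hasse_factor[where d=d and dl=dl]) (use d0 dadd dmult dl DH in auto)
    thus ?thesis by (simp add: det_mult[of _ "length \<phi>"] Cmat_def Dmat_def)
  qed
  thus ?thesis using det_Cmat[where d=d, OF d0 U F] classical_iff[of D \<phi>] by simp
qed


definition Q1 :: "'K::field \<Rightarrow> 'K \<Rightarrow> 'K \<Rightarrow> 'K" where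
  "Q1 N M s = (- N * s)"

definition dQ1 :: "'K::field \<Rightarrow> 'K \<Rightarrow> 'K \<Rightarrow> 'K" where
  "dQ1 N M s = (- N)"

definition Qt1 :: "'K::field \<Rightarrow> 'K \<Rightarrow> 'K \<Rightarrow> 'K" where
  "Qt1 N M u = (- N * u)"

definition Q2 :: "'K::field \<Rightarrow> 'K \<Rightarrow> 'K \<Rightarrow> 'K" where
  "Q2 N M s = (N * M * s + N^2 * s^2 - N^2 * M * s - N^2 * M * s^2)"

definition dQ2 :: "'K::field \<Rightarrow> 'K \<Rightarrow> 'K \<Rightarrow> 'K" where
  "dQ2 N M s = (N * M + 2 * N^2 * s - N^2 * M - 2 * N^2 * M * s)"

definition Qt2 :: "'K::field \<Rightarrow> 'K \<Rightarrow> 'K \<Rightarrow> 'K" where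
  "Qt2 N M u = (N * M * u - N * M * u^2 + N^2 * u^2 - N^2 * M * u)"

definition Q3 :: "'K::field \<Rightarrow> 'K \<Rightarrow> 'K \<Rightarrow> 'K" where
  "Q3 N M s = (- 2 * N * M^2 * s - 3 * N^2 * M * s^2 + 3 * N^2 * M^2 * s + 3 * N^2 * M^2 * s^2 - N^3 * s^3 + 3 * N^3 * M * s^2 + 3 * N^3 * M * s^3 - N^3 * M^2 * s - 3 * N^3 * M^2 * s^2 - 2 * N^3 * M^2 * s^3)"

definition dQ3 :: "'K::field \<Rightarrow> 'K \<Rightarrow> 'K \<Rightarrow> 'K" where
  "dQ3 N M s = (- 2 * N * M^2 - 6 * N^2 * M * s + 3 * N^2 * M^2 + 6 * N^2 * M^2 * s - 3 * N^3 * s^2 + 6 * N^3 * M * s + 9 * N^3 * M * s^2 - N^3 * M^2 - 6 * N^3 * M^2 * s - 6 * N^3 * M^2 * s^2)"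

definition Qt3 :: "'K::field \<Rightarrow> 'K \<Rightarrow> 'K \<Rightarrow> 'K" where
  "Qt3 N M u = (- 2 * N * M^2 * u + 4 * N * M^2 * u^2 - 2 * N * M^2 * u^3 - 3 * N^2 * M * u^2 + 3 * N^2 * M * u^3 + 3 * N^2 * M^2 * u - 3 * N^2 * M^2 * u^2 - N^3 * u^3 + 3 * N^3 * M * u^2 - N^3 * M^2 * u - N^3 * M^2 * u^2)"

definition Q4 :: "'K::field \<Rightarrow> 'K \<Rightarrow> 'K \<Rightarrow> 'K" where
  "Q4 N M s = (6 * N * M^3 * s + 11 * N^2 * M^2 * s^2 - 11 * N^2 * M^3 * s - 11 * N^2 * M^3 * s^2 + 6 * N^3 * M * s^3 - 18 * N^3 * M^2 * s^2 - 18 * N^3 * M^2 * s^3 + 6 * N^3 * M^3 * s + 18 * N^3 * M^3 * s^2 + 12 * N^3 * M^3 * s^3 + N^4 * s^4 - 6 * N^4 * M * s^3 - 6 * N^4 * M * s^4 + 7 * N^4 * M^2 * s^2 + 18 * N^4 * M^2 * s^3 + 11 * N^4 * M^2 * s^4 - N^4 * M^3 * s - 7 * N^4 * M^3 * s^2 - 12 * N^4 * M^3 * s^3 - 6 * N^4 * M^3 * s^4)"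

definition dQ4 :: "'K::field \<Rightarrow> 'K \<Rightarrow> 'K \<Rightarrow> 'K" where
  "dQ4 N M s = (6 * N * M^3 + 22 * N^2 * M^2 * s - 11 * N^2 * M^3 - 22 * N^2 * M^3 * s + 18 * N^3 * M * s^2 - 36 * N^3 * M^2 * s - 54 * N^3 * M^2 * s^2 + 6 * N^3 * M^3 + 36 * N^3 * M^3 * s + 36 * N^3 * M^3 * s^2 + 4 * N^4 * s^3 - 18 * N^4 * M * s^2 - 24 * N^4 * M * s^3 + 14 * N^4 * M^2 * s + 54 * N^4 * M^2 * s^2 + 44 * N^4 * M^2 * s^3 - N^4 * M^3 - 14 * N^4 * M^3 * s - 36 * N^4 * M^3 * s^2 - 24 * N^4 * M^3 * s^3)"

definition Qt4 :: "'K::field \<Rightarrow> 'K \<Rightarrow> 'K \<Rightarrow> 'K" where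
  "Qt4 N M u = (6 * N * M^3 * u - 18 * N * M^3 * u^2 + 18 * N * M^3 * u^3 - 6 * N * M^3 * u^4 + 11 * N^2 * M^2 * u^2 - 22 * N^2 * M^2 * u^3 + 11 * N^2 * M^2 * u^4 - 11 * N^2 * M^3 * u + 22 * N^2 * M^3 * u^2 - 11 * N^2 * M^3 * u^3 + 6 * N^3 * M * u^3 - 6 * N^3 * M * u^4 - 18 * N^3 * M^2 * u^2 + 18 * N^3 * M^2 * u^3 + 6 * N^3 * M^3 * u - 6 * N^3 * M^3 * u^3 + N^4 * u^4 - 6 * N^4 * M * u^3 + 7 * N^4 * M^2 * u^2 + 4 * N^4 * M^2 * u^3 - N^4 * M^3 * u - 4 * N^4 * M^3 * u^2 - N^4 * M^3 * u^3)"

definition Q5 :: "'K::field \<Rightarrow> 'K \<Rightarrow> 'K \<Rightarrow> 'K" where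
  "Q5 N M s = (- 24 * N * M^4 * s - 50 * N^2 * M^3 * s^2 + 50 * N^2 * M^4 * s + 50 * N^2 * M^4 * s^2 - 35 * N^3 * M^2 * s^3 + 105 * N^3 * M^3 * s^2 + 105 * N^3 * M^3 * s^3 - 35 * N^3 * M^4 * s - 105 * N^3 * M^4 * s^2 - 70 * N^3 * M^4 * s^3 - 10 * N^4 * M * s^4 + 60 * N^4 * M^2 * s^3 + 60 * N^4 * M^2 * s^4 - 70 * N^4 * M^3 * s^2 - 180 * N^4 * M^3 * s^3 - 110 * N^4 * M^3 * s^4 + 10 * N^4 * M^4 * s + 70 * N^4 * M^4 * s^2 + 120 * N^4 * M^4 * s^3 + 60 * N^4 * M^4 * s^4 - N^5 * s^5 + 10 * N^5 * M * s^4 + 10 * N^5 * M * s^5 - 25 * N^5 * M^2 * s^3 - 60 * N^5 * M^2 * s^4 - 35 * N^5 * M^2 * s^5 + 15 * N^5 * M^3 * s^2 + 75 * N^5 * M^3 * s^3 + 110 * N^5 * M^3 * s^4 + 50 * N^5 * M^3 * s^5 - N^5 * M^4 * s - 15 * N^5 * M^4 * s^2 - 50 * N^5 * M^4 * s^3 - 60 * N^5 * M^4 * s^4 - 24 * N^5 * M^4 * s^5)"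

definition dQ5 :: "'K::field \<Rightarrow> 'K \<Rightarrow> 'K \<Rightarrow> 'K" where
  "dQ5 N M s = (- 24 * N * M^4 - 100 * N^2 * M^3 * s + 50 * N^2 * M^4 + 100 * N^2 * M^4 * s - 105 * N^3 * M^2 * s^2 + 210 * N^3 * M^3 * s + 315 * N^3 * M^3 * s^2 - 35 * N^3 * M^4 - 210 * N^3 * M^4 * s - 210 * N^3 * M^4 * s^2 - 40 * N^4 * M * s^3 + 180 * N^4 * M^2 * s^2 + 240 * N^4 * M^2 * s^3 - 140 * N^4 * M^3 * s - 540 * N^4 * M^3 * s^2 - 440 * N^4 * M^3 * s^3 + 10 * N^4 * M^4 + 140 * N^4 * M^4 * s + 360 * N^4 * M^4 * s^2 + 240 * N^4 * M^4 * s^3 - 5 * N^5 * s^4 + 40 * N^5 * M * s^3 + 50 * N^5 * M * s^4 - 75 * N^5 * M^2 * s^2 - 240 * N^5 * M^2 * s^3 - 175 * N^5 * M^2 * s^4 + 30 * N^5 * M^3 * s + 225 * N^5 * M^3 * s^2 + 440 * N^5 * M^3 * s^3 + 250 * N^5 * M^3 * s^4 - N^5 * M^4 - 30 * N^5 * M^4 * s - 150 * N^5 * M^4 * s^2 - 240 * N^5 * M^4 * s^3 - 120 * N^5 * M^4 * s^4)"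

definition Qt5 :: "'K::field \<Rightarrow> 'K \<Rightarrow> 'K \<Rightarrow> 'K" where
  "Qt5 N M u = (- 24 * N * M^4 * u + 96 * N * M^4 * u^2 - 144 * N * M^4 * u^3 + 96 * N * M^4 * u^4 - 24 * N * M^4 * u^5 - 50 * N^2 * M^3 * u^2 + 150 * N^2 * M^3 * u^3 - 150 * N^2 * M^3 * u^4 + 50 * N^2 * M^3 * u^5 + 50 * N^2 * M^4 * u - 150 * N^2 * M^4 * u^2 + 150 * N^2 * M^4 * u^3 - 50 * N^2 * M^4 * u^4 - 35 * N^3 * M^2 * u^3 + 70 * N^3 * M^2 * u^4 - 35 * N^3 * M^2 * u^5 + 105 * N^3 * M^3 * u^2 - 210 * N^3 * M^3 * u^3 + 105 * N^3 * M^3 * u^4 - 35 * N^3 * M^4 * u + 35 * N^3 * M^4 * u^2 + 35 * N^3 * M^4 * u^3 - 35 * N^3 * M^4 * u^4 - 10 * N^4 * M * u^4 + 10 * N^4 * M * u^5 + 60 * N^4 * M^2 * u^3 - 60 * N^4 * M^2 * u^4 - 70 * N^4 * M^3 * u^2 + 30 * N^4 * M^3 * u^3 + 40 * N^4 * M^3 * u^4 + 10 * N^4 * M^4 * u + 30 * N^4 * M^4 * u^2 - 30 * N^4 * M^4 * u^3 - 10 * N^4 * M^4 * u^4 - N^5 * u^5 + 10 * N^5 * M * u^4 - 25 * N^5 * M^2 * u^3 - 10 * N^5 * M^2 * u^4 + 15 * N^5 * M^3 * u^2 + 30 * N^5 * M^3 * u^3 + 5 * N^5 * M^3 * u^4 -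 N^5 * M^4 * u - 11 * N^5 * M^4 * u^2 - 11 * N^5 * M^4 * u^3 - N^5 * M^4 * u^4)"

context derivation begin

lemma d_epow: "(d ee = - (ee^2)) \<Longrightarrow> d (ee ^ i) = - of_nat i * ee ^ (Suc i)"
proof -
  assume de: "d ee = - (ee^2)"
  show ?thesis
  proof (cases i)
    case 0 thus ?thesis by simp
  next
    case (Suc j)
    have "d (ee^i) = of_nat i * ee^(i-1) * d ee" by (rule d_power)
    also have "\<dots> = - of_nat i * ee^(Suc i)" using Suc de by (simp add: power2_eq_square algebra_simps)
    finally show ?thesis .
  qed
qed

lemma step:
  assumes dN: "d N = 0" and dM: "d M = 0" and M: "M \<noteq> 0" and de: "d ee = - (ee^2)"
    and ds: "d s = N*ee*s*(s+1)" and dy: "d y = -(N/M)*ee*s*y" and dQ: "d Q = Q' * d s"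
  shows "d (y * ee^i * Q / M^i) = y * ee^(Suc i) * (- of_nat i * M * Q - N * s * Q + M * N * s * (s + 1) * Q') / M^(Suc i)"
proof -
  have dMi: "d (M^i) = 0" using dM by (simp add: d_power)
  have dyM: "d y * M = - N*ee*s*y" using dy M by simp
  have "d (y * ee^i * Q / M^i) = d (y * ee^i * Q) / M^i"
    using M dMi by (simp add: d_divide power2_eq_square)
  also have "\<dots> = (d (y * ee^i * Q) * M) / M^(Suc i)" using M by simp
  also have "d (y * ee^i * Q) * M = (d y * M) * ee^i * Q + M * (y * d (ee^i) * Q + y * ee^i * d Q)"
    by (simp add: d_mult algebra_simps)
  also have "\<dots> = y * ee^(Suc i) * (- of_nat i * M * Q - N * s * Q + M * N * s * (s + 1) * Q')"
    unfolding dyM d_epow[OF de] dQ ds by (simp add: algebra_simps)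
  finally show ?thesis .
qed

end

definition C4 :: "'K::field \<Rightarrow> 'K \<Rightarrow> 'K" where
  "C4 N M = (4 * N^4 * M^7 - 22 * N^5 * M^7 + 42 * N^6 * M^7 - 24 * N^7 * M^7 - 24 * N^8 * M^7 + 42 * N^9 * M^7 - 22 * N^10 * M^7 + 4 * N^11 * M^7)"

definition E4 :: "'K::field \<Rightarrow> 'K \<Rightarrow> 'K" where
  "E4 X Y = (512 * X^4 * Y^7 - 1408 * X^5 * Y^7 + 1344 * X^6 * Y^7 - 384 * X^7 * Y^7 - 192 * X^8 * Y^7 + 168 * X^9 * Y^7 - 44 * X^10 * Y^7 + 4 * X^11 * Y^7)"

definition C5 :: "'K::field \<Rightarrow> 'K \<Rightarrow> 'K" where
  "C5 N M = (- 28 * N^4 * M^7 + 22 * N^5 * M^6 + 132 * N^5 * M^7 - 99 * N^6 * M^6 - 195 * N^6 * M^7 + 132 * N^7 * M^6 + 36 * N^7 * M^7 + 168 * N^8 * M^7 - 132 * N^9 * M^6 - 162 * N^9 * M^7 + 99 * N^10 * M^6 + 55 * N^10 * M^7 - 22 * N^11 * M^6 - 6 * N^11 * M^7)"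

definition E5 :: "'K::field \<Rightarrow> 'K \<Rightarrow> 'K" where
  "E5 X Y = (- 3584 * X^4 * Y^7 + 5632 * X^5 * Y^6 + 8448 * X^5 * Y^7 - 12672 * X^6 * Y^6 - 6240 * X^6 * Y^7 + 8448 * X^7 * Y^6 + 576 * X^7 * Y^7 + 1344 * X^8 * Y^7 - 2112 * X^9 * Y^6 - 648 * X^9 * Y^7 + 792 * X^10 * Y^6 + 110 * X^10 * Y^7 - 88 * X^11 * Y^6 - 6 * X^11 * Y^7)"

definition C6 :: "'K::field \<Rightarrow> 'K \<Rightarrow> 'K" where
  "C6 N M = (84 * N^4 * M^7 - 132 * N^5 * M^6 - 330 * N^5 * M^7 + 42 * N^6 * M^5 + 495 * N^6 * M^6 + 345 * N^6 * M^7 - 132 * N^7 * M^5 - 468 * N^7 * M^6 + 96 * N^7 * M^7 + 60 * N^8 * M^5 - 180 * N^8 * M^6 - 384 * N^8 * M^7 + 120 * N^9 * M^5 + 522 * N^9 * M^6 + 240 * N^9 * M^7 - 102 * N^10 * M^5 - 315 * N^10 * M^6 - 45 * N^10 * M^7 + 12 * N^11 * M^5 + 78 * N^11 * M^6 - 6 * N^11 * M^7)"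

definition E6 :: "'K::field \<Rightarrow> 'K \<Rightarrow> 'K" where
  "E6 X Y = (10752 * X^4 * Y^7 - 33792 * X^5 * Y^6 - 21120 * X^5 * Y^7 + 21504 * X^6 * Y^5 + 63360 * X^6 * Y^6 + 11040 * X^6 * Y^7 - 33792 * X^7 * Y^5 - 29952 * X^7 * Y^6 + 1536 * X^7 * Y^7 + 7680 * X^8 * Y^5 - 5760 * X^8 * Y^6 - 3072 * X^8 * Y^7 + 7680 * X^9 * Y^5 + 8352 * X^9 * Y^6 + 960 * X^9 * Y^7 - 3264 * X^10 * Y^5 - 2520 * X^10 * Y^6 - 90 * X^10 * Y^7 + 192 * X^11 * Y^5 + 312 * X^11 * Y^6 - 6 * X^11 * Y^7)"

definition C7 :: "'K::field \<Rightarrow> 'K \<Rightarrow> 'K" where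
  "C7 N M = (- 140 * N^4 * M^7 + 330 * N^5 * M^6 + 440 * N^5 * M^7 - 210 * N^6 * M^5 - 990 * N^6 * M^6 - 270 * N^6 * M^7 + 24 * N^7 * M^4 + 528 * N^7 * M^5 + 552 * N^7 * M^6 - 264 * N^7 * M^7 - 75 * N^8 * M^5 + 540 * N^8 * M^6 + 375 * N^8 * M^7 - 165 * N^9 * M^4 - 480 * N^9 * M^5 - 645 * N^9 * M^6 - 180 * N^9 * M^7 + 180 * N^10 * M^4 + 285 * N^10 * M^5 + 270 * N^10 * M^6 + 35 * N^10 * M^7 - 39 * N^11 * M^4 - 48 * N^11 * M^5 - 57 * N^11 * M^6 + 4 * N^11 * M^7)"

definition E7 :: "'K::field \<Rightarrow> 'K \<Rightarrow> 'K" where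
  "E7 X Y = (- 17920 * X^4 * Y^7 + 84480 * X^5 * Y^6 + 28160 * X^5 * Y^7 - 107520 * X^6 * Y^5 - 126720 * X^6 * Y^6 - 8640 * X^6 * Y^7 + 24576 * X^7 * Y^4 + 135168 * X^7 * Y^5 + 35328 * X^7 * Y^6 - 4224 * X^7 * Y^7 - 9600 * X^8 * Y^5 + 17280 * X^8 * Y^6 + 3000 * X^8 * Y^7 - 42240 * X^9 * Y^4 - 30720 * X^9 * Y^5 - 10320 * X^9 * Y^6 - 720 * X^9 * Y^7 + 23040 * X^10 * Y^4 + 9120 * X^10 * Y^5 + 2160 * X^10 * Y^6 + 70 * X^10 * Y^7 - 2496 * X^11 * Y^4 - 768 * X^11 * Y^5 - 228 * X^11 * Y^6 + 4 * X^11 * Y^7)"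

definition C8 :: "'K::field \<Rightarrow> 'K \<Rightarrow> 'K" where
  "C8 N M = (140 * N^4 * M^7 - 440 * N^5 * M^6 - 330 * N^5 * M^7 + 420 * N^6 * M^5 + 990 * N^6 * M^6 + 60 * N^6 * M^7 - 96 * N^7 * M^4 - 792 * N^7 * M^5 - 168 * N^7 * M^6 + 216 * N^7 * M^7 - 24 * N^8 * M^3 - 135 * N^8 * M^5 - 540 * N^8 * M^6 - 141 * N^8 * M^7 + 132 * N^9 * M^3 + 435 * N^9 * M^4 + 600 * N^9 * M^5 + 225 * N^9 * M^6 + 78 * N^9 * M^7 - 192 * N^10 * M^3 - 360 * N^10 * M^4 - 105 * N^10 * M^5 - 90 * N^10 * M^6 - 23 * N^10 * M^7 + 84 * N^11 * M^3 + 21 * N^11 * M^4 + 12 * N^11 * M^5 + 23 * N^11 * M^6)"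

definition E8 :: "'K::field \<Rightarrow> 'K \<Rightarrow> 'K" where
  "E8 X Y = (17920 * X^4 * Y^7 - 112640 * X^5 * Y^6 - 21120 * X^5 * Y^7 + 215040 * X^6 * Y^5 + 126720 * X^6 * Y^6 + 1920 * X^6 * Y^7 - 98304 * X^7 * Y^4 - 202752 * X^7 * Y^5 - 10752 * X^7 * Y^6 + 3456 * X^7 * Y^7 - 49152 * X^8 * Y^3 - 17280 * X^8 * Y^5 - 17280 * X^8 * Y^6 - 1128 * X^8 * Y^7 + 135168 * X^9 * Y^3 + 111360 * X^9 * Y^4 + 38400 * X^9 * Y^5 + 3600 * X^9 * Y^6 + 312 * X^9 * Y^7 - 98304 * X^10 * Y^3 - 46080 * X^10 * Y^4 - 3360 * X^10 * Y^5 - 720 * X^10 * Y^6 - 46 * X^10 * Y^7 + 21504 * X^11 * Y^3 + 1344 * X^11 * Y^4 + 192 * X^11 * Y^5 + 92 * X^11 * Y^6)"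

definition C9 :: "'K::field \<Rightarrow> 'K \<Rightarrow> 'K" where
  "C9 N M = (- 84 * N^4 * M^7 + 330 * N^5 * M^6 + 132 * N^5 * M^7 - 420 * N^6 * M^5 - 495 * N^6 * M^6 + 33 * N^6 * M^7 + 144 * N^7 * M^4 + 528 * N^7 * M^5 - 108 * N^7 * M^6 - 60 * N^7 * M^7 + 72 * N^8 * M^3 + 255 * N^8 * M^5 + 180 * N^8 * M^6 - 3 * N^8 * M^7 - 42 * N^9 * M^2 - 264 * N^9 * M^3 - 375 * N^9 * M^4 - 240 * N^9 * M^5 + 57 * N^9 * M^6 - 18 * N^9 * M^7 + 99 * N^10 * M^2 + 252 * N^10 * M^3 + 180 * N^10 * M^4 - 105 * N^10 * M^5 + 36 * N^10 * M^6 - 57 * N^11 * M^2 - 60 * N^11 * M^3 + 51 * N^11 * M^4 - 18 * N^11 * M^5)"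

definition E9 :: "'K::field \<Rightarrow> 'K \<Rightarrow> 'K" where
  "E9 X Y = (- 10752 * X^4 * Y^7 + 84480 * X^5 * Y^6 + 8448 * X^5 * Y^7 - 215040 * X^6 * Y^5 - 63360 * X^6 * Y^6 + 1056 * X^6 * Y^7 + 147456 * X^7 * Y^4 + 135168 * X^7 * Y^5 - 6912 * X^7 * Y^6 - 960 * X^7 * Y^7 + 147456 * X^8 * Y^3 + 32640 * X^8 * Y^5 + 5760 * X^8 * Y^6 - 24 * X^8 * Y^7 - 172032 * X^9 * Y^2 - 270336 * X^9 * Y^3 - 96000 * X^9 * Y^4 - 15360 * X^9 * Y^5 + 912 * X^9 * Y^6 - 72 * X^9 * Y^7 + 202752 * X^10 * Y^2 + 129024 * X^10 * Y^3 + 23040 * X^10 * Y^4 - 3360 * X^10 * Y^5 + 288 * X^10 * Y^6 - 58368 * X^11 * Y^2 - 15360 * X^11 * Y^3 + 3264 * X^11 * Y^4 - 288 * X^11 * Y^5)"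

definition C10 :: "'K::field \<Rightarrow> 'K \<Rightarrow> 'K" where
  "C10 N M = (28 * N^4 * M^7 - 132 * N^5 * M^6 - 22 * N^5 * M^7 + 210 * N^6 * M^5 + 99 * N^6 * M^6 - 15 * N^6 * M^7 - 96 * N^7 * M^4 - 132 * N^7 * M^5 + 60 * N^7 * M^6 - 72 * N^8 * M^3 - 105 * N^8 * M^5 + 9 * N^8 * M^7 + 84 * N^9 * M^2 + 132 * N^9 * M^3 + 105 * N^9 * M^4 - 27 * N^9 * M^6 - 22 * N^10 * M - 99 * N^10 * M^2 - 60 * N^10 * M^3 + 27 * N^10 * M^5 + 22 * N^11 * M + 15 * N^11 * M^2 - 9 * N^11 * M^4)"

definition E10 :: "'K::field \<Rightarrow> 'K \<Rightarrow> 'K" where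
  "E10 X Y = (3584 * X^4 * Y^7 - 33792 * X^5 * Y^6 - 1408 * X^5 * Y^7 + 107520 * X^6 * Y^5 + 12672 * X^6 * Y^6 - 480 * X^6 * Y^7 - 98304 * X^7 * Y^4 - 33792 * X^7 * Y^5 + 3840 * X^7 * Y^6 - 147456 * X^8 * Y^3 - 13440 * X^8 * Y^5 + 72 * X^8 * Y^7 + 344064 * X^9 * Y^2 + 135168 * X^9 * Y^3 + 26880 * X^9 * Y^4 - 432 * X^9 * Y^6 - 180224 * X^10 * Y - 202752 * X^10 * Y^2 - 30720 * X^10 * Y^3 + 864 * X^10 * Y^5 + 90112 * X^11 * Y + 15360 * X^11 * Y^2 - 576 * X^11 * Y^4)"

definition C11 :: "'K::field \<Rightarrow> 'K \<Rightarrow> 'K" where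
  "C11 N M = (- 4 * N^4 * M^7 + 22 * N^5 * M^6 - 42 * N^6 * M^5 + 24 * N^7 * M^4 + 24 * N^8 * M^3 - 42 * N^9 * M^2 + 22 * N^10 * M - 4 * N^11)"

definition E11 :: "'K::field \<Rightarrow> 'K \<Rightarrow> 'K" where
  "E11 X Y = (- 512 * X^4 * Y^7 + 5632 * X^5 * Y^6 - 21504 * X^6 * Y^5 + 24576 * X^7 * Y^4 + 49152 * X^8 * Y^3 - 172032 * X^9 * Y^2 + 180224 * X^10 * Y - 65536 * X^11)"

lemma nz_smooth:
  assumes "CHAR('K::field) = p" "prime p" "p > 5"
  shows "(of_nat (2^a * 3^b * 5^c) :: 'K) \<noteq> 0"
proof
  assume "(of_nat (2^a * 3^b * 5^c) :: 'K) = 0"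
  hence "CHAR('K) dvd 2^a * 3^b * 5^c" by (simp only: of_nat_eq_0_iff_char_dvd)
  hence "p dvd 2^a * 3^b * 5^c" using assms(1) by simp
  hence "p dvd 2 \<or> p dvd 3 \<or> p dvd 5" using assms(2)
    by (auto simp: prime_dvd_mult_iff dest: prime_dvd_power)
  hence "p \<le> 5" by (auto dest: dvd_imp_le)
  thus False using assms(3) by simp
qed

lemma E4_fact: "E4 X Y = 4 * X^4 * Y^7 * (X-2)^4 * (X+2) * (X-4) * (X-1)"
  unfolding E4_def by (simp add: algebra_simps eval_nat_numeral)
lemma E11_fact: "E11 X Y = - 512 * X^4 * (Y-2*X)^4 * (Y+2*X) * (Y-4*X) * (Y-X)"
  unfolding E11_def by (simp add: algebra_simps eval_nat_numeral)

lemma C7_scale: "2^25 * C7 N M = E7 (2*N) (4*M)"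
  unfolding C7_def E7_def by (simp add: algebra_simps power_mult_distrib)

lemma C4_scale: "2^25 * C4 N M = E4 (2*N) (4*M)"
  unfolding C4_def E4_def by (simp add: algebra_simps)
lemma C5_scale: "2^25 * C5 N M = E5 (2*N) (4*M)"
  unfolding C5_def E5_def by (simp add: algebra_simps)
lemma C6_scale: "2^25 * C6 N M = E6 (2*N) (4*M)"
  unfolding C6_def E6_def by (simp add: algebra_simps)
lemma C8_scale: "2^25 * C8 N M = E8 (2*N) (4*M)"
  unfolding C8_def E8_def by (simp add: algebra_simps)
lemma C9_scale: "2^25 * C9 N M = E9 (2*N) (4*M)"
  unfolding C9_def E9_def by (simp add: algebra_simps)
lemma C10_scale: "2^25 * C10 N M = E10 (2*N) (4*M)"
  unfolding C10_def E10_def by (simp add: algebra_simps)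
lemma C11_scale: "2^25 * C11 N M = E11 (2*N) (4*M)"
  unfolding C11_def E11_def by (simp add: algebra_simps)


definition GOODXY :: "'K::field \<Rightarrow> 'K \<Rightarrow> bool" where
  "GOODXY X Y \<longleftrightarrow> (Y = 8 \<and> X = 4) \<or> (Y = -4 \<and> X = -2) \<or> (Y = 2 \<and> X = 1) \<or>
     (Y = 4 \<and> (X = 2 \<or> X = 4 \<or> X = 1 \<or> X = -2)) \<or> (X = 2 \<and> (Y = -4 \<or> Y = 8 \<or> Y = 2))"

definition EALL :: "'K::field \<Rightarrow> 'K \<Rightarrow> bool" where
  "EALL X Y \<longleftrightarrow> E4 X Y = 0 \<and> E5 X Y = 0 \<and> E6 X Y = 0 \<and> E7 X Y = 0 \<and> E8 X Y = 0 \<and> E9 X Y = 0 \<and> E10 X Y = 0 \<and> E11 X Y = 0"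

lemma good0: "EALL (4) (8)"
  unfolding EALL_def E4_def E5_def E6_def E7_def E8_def E9_def E10_def E11_def by simp
lemma good1: "EALL (- 2) (- 4)"
  unfolding EALL_def E4_def E5_def E6_def E7_def E8_def E9_def E10_def E11_def by simp
lemma good2: "EALL (1) (2)"
  unfolding EALL_def E4_def E5_def E6_def E7_def E8_def E9_def E10_def E11_def by simp
lemma good3: "EALL (2) (4)"
  unfolding EALL_def E4_def E5_def E6_def E7_def E8_def E9_def E10_def E11_def by simp
lemma good4: "EALL (4) (4)"
  unfolding EALL_def E4_def E5_def E6_def E7_def E8_def E9_def E10_def E11_def by simp
lemma good5: "EALL (1) (4)"
  unfolding EALL_def E4_def E5_def E6_def E7_def E8_def E9_def E10_def E11_def by simp
lemma good6: "EALL (- 2) (4)"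
  unfolding EALL_def E4_def E5_def E6_def E7_def E8_def E9_def E10_def E11_def by simp
lemma good7: "EALL (2) (- 4)"
  unfolding EALL_def E4_def E5_def E6_def E7_def E8_def E9_def E10_def E11_def by simp
lemma good8: "EALL (2) (8)"
  unfolding EALL_def E4_def E5_def E6_def E7_def E8_def E9_def E10_def E11_def by simp
lemma good9: "EALL (2) (2)"
  unfolding EALL_def E4_def E5_def E6_def E7_def E8_def E9_def E10_def E11_def by simp
lemma bad0:
  assumes ch: "CHAR('K::field) = p" "prime p" "p > 5"
  shows "E7 (- 2) (- 8) \<noteq> (0::'K)"
proof -
  have "E7 (- 2) (- 8) = ((- 579820584960)::'K)" unfolding E7_def by simp
  moreover have "(579820584960::'K) \<noteq> 0" using nz_smooth[OF ch, of 32 3 1] by simp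
  ultimately show ?thesis by simp
qed
lemma bad1:
  assumes ch: "CHAR('K::field) = p" "prime p" "p > 5"
  shows "E7 (- 2) (- 2) \<noteq> (0::'K)"
proof -
  have "E7 (- 2) (- 2) = ((566231040)::'K)" unfolding E7_def by simp
  moreover have "(566231040::'K) \<noteq> 0" using nz_smooth[OF ch, of 22 3 1] by simp
  ultimately show ?thesis by simp
qed
lemma bad2:
  assumes ch: "CHAR('K::field) = p" "prime p" "p > 5"
  shows "E6 (4) (- 8) \<noteq> (0::'K)"
proof -
  have "E6 (4) (- 8) = ((111325552312320)::'K)" unfolding E6_def by simp
  moreover have "(111325552312320::'K) \<noteq> 0" using nz_smooth[OF ch, of 38 4 1] by simp
  ultimately show ?thesis by simp
qed
lemma bad3:
  assumes ch: "CHAR('K::field) = p" "prime p" "p > 5"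
  shows "E6 (4) (16) \<noteq> (0::'K)"
proof -
  have "E6 (4) (16) = ((- 1781208836997120)::'K)" unfolding E6_def by simp
  moreover have "(1781208836997120::'K) \<noteq> 0" using nz_smooth[OF ch, of 42 4 1] by simp
  ultimately show ?thesis by simp
qed
lemma bad4:
  assumes ch: "CHAR('K::field) = p" "prime p" "p > 5"
  shows "E7 (1) (- 2) \<noteq> (0::'K)"
proof -
  have "E7 (1) (- 2) = ((345600)::'K)" unfolding E7_def by simp
  moreover have "(345600::'K) \<noteq> 0" using nz_smooth[OF ch, of 9 3 2] by simp
  ultimately show ?thesis by simp
qed
lemma bad5:
  assumes ch: "CHAR('K::field) = p" "prime p" "p > 5"
  shows "E7 (1) (1) \<noteq> (0::'K)"
proof -
  have "E7 (1) (1) = ((270)::'K)" unfolding E7_def by simp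
  moreover have "(270::'K) \<noteq> 0" using nz_smooth[OF ch, of 1 3 1] by simp
  ultimately show ?thesis by simp
qed

lemma nt_XY:
  fixes X Y :: "'K::field"
  assumes ch: "CHAR('K) = p" "prime p" "p > 5" and XY: "X \<noteq> 0" "Y \<noteq> 0"
  shows "EALL X Y \<longleftrightarrow> GOODXY X Y"
proof
  have n4: "(4::'K) \<noteq> 0" using nz_smooth[OF ch, of 2 0 0] by simp
  have n512: "(512::'K) \<noteq> 0" using nz_smooth[OF ch, of 9 0 0] by simp
  assume H: "EALL X Y"
  have hx: "X = 2 \<or> X = -2 \<or> X = 4 \<or> X = 1"
    using H n4 XY unfolding EALL_def E4_fact by (auto simp: eq_neg_iff_add_eq_0)
  have hy: "Y = 2*X \<or> Y = -2*X \<or> Y = 4*X \<or> Y = X"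
    using H n512 XY unfolding EALL_def E11_fact by (auto simp: eq_neg_iff_add_eq_0)
  note bads = bad0[OF ch] bad1[OF ch] bad2[OF ch] bad3[OF ch] bad4[OF ch] bad5[OF ch]
  from hx hy H bads show "GOODXY X Y"
    unfolding EALL_def GOODXY_def by auto
next
  assume "GOODXY X Y"
  thus "EALL X Y" using good0 good1 good2 good3 good4 good5 good6 good7 good8 good9
    unfolding GOODXY_def by auto
qed


definition Ap :: "'K::field \<Rightarrow> 'K \<Rightarrow> 'K \<Rightarrow> 'K" where
  "Ap N M u = (N^2 * M^2 * u^2 - 2 * N^2 * M^2 * u^3 + N^2 * M^2 * u^4 + 2 * N^3 * M * u^3 - 2 * N^3 * M * u^4 - 2 * N^3 * M^2 * u^2 + 2 * N^3 * M^2 * u^3 + N^4 * u^4 - 2 * N^4 * M * u^3 + N^4 * M^2 * u^2)"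

definition Bp :: "'K::field \<Rightarrow> 'K \<Rightarrow> 'K \<Rightarrow> 'K" where
  "Bp N M u = (- 24 * N^3 * M^6 * u^3 + 144 * N^3 * M^6 * u^4 - 360 * N^3 * M^6 * u^5 + 480 * N^3 * M^6 * u^6 - 360 * N^3 * M^6 * u^7 + 144 * N^3 * M^6 * u^8 - 24 * N^3 * M^6 * u^9 - 98 * N^4 * M^5 * u^4 + 490 * N^4 * M^5 * u^5 - 980 * N^4 * M^5 * u^6 + 980 * N^4 * M^5 * u^7 - 490 * N^4 * M^5 * u^8 + 98 * N^4 * M^5 * u^9 + 98 * N^4 * M^6 * u^3 - 490 * N^4 * M^6 * u^4 + 980 * N^4 * M^6 * u^5 - 980 * N^4 * M^6 * u^6 + 490 * N^4 * M^6 * u^7 - 98 * N^4 * M^6 * u^8 - 159 * N^5 * M^4 * u^5 + 636 * N^5 * M^4 * u^6 - 954 * N^5 * M^4 * u^7 + 636 * N^5 * M^4 * u^8 - 159 * N^5 * M^4 * u^9 + 353 * N^5 * M^5 * u^4 - 1412 * N^5 * M^5 * u^5 + 2118 * N^5 * M^5 * u^6 - 1412 * N^5 * M^5 * u^7 + 353 * N^5 * M^5 * u^8 - 159 * N^5 * M^6 * u^3 + 601 * N^5 * M^6 * u^4 - 814 * N^5 * M^6 * u^5 + 426 * N^5 * M^6 * u^6 - 19 * N^5 * M^6 * u^7 - 35 * N^5 * M^6 * u^8 - 130 * N^6 * M^3 * u^6 + 390 * N^6 * M^3 * u^7 - 390 * N^6 * M^3 * u^8 + 130 * N^6 * M^3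 * u^9 + 490 * N^6 * M^4 * u^5 - 1470 * N^6 * M^4 * u^6 + 1470 * N^6 * M^4 * u^7 - 490 * N^6 * M^4 * u^8 - 500 * N^6 * M^5 * u^4 + 1390 * N^6 * M^5 * u^5 - 1170 * N^6 * M^5 * u^6 + 170 * N^6 * M^5 * u^7 + 110 * N^6 * M^5 * u^8 + 130 * N^6 * M^6 * u^3 - 280 * N^6 * M^6 * u^4 + 70 * N^6 * M^6 * u^5 + 170 * N^6 * M^6 * u^6 - 80 * N^6 * M^6 * u^7 - 10 * N^6 * M^6 * u^8 - 56 * N^7 * M^2 * u^7 + 112 * N^7 * M^2 * u^8 - 56 * N^7 * M^2 * u^9 + 325 * N^7 * M^3 * u^6 - 650 * N^7 * M^3 * u^7 + 325 * N^7 * M^3 * u^8 - 565 * N^7 * M^4 * u^5 + 1005 * N^7 * M^4 * u^6 - 315 * N^7 * M^4 * u^7 - 125 * N^7 * M^4 * u^8 + 350 * N^7 * M^5 * u^4 - 440 * N^7 * M^5 * u^5 - 145 * N^7 * M^5 * u^6 + 210 * N^7 * M^5 * u^7 + 25 * N^7 * M^5 * u^8 - 56 * N^7 * M^6 * u^3 - 14 * N^7 * M^6 * u^4 + 165 * N^7 * M^6 * u^5 - 65 * N^7 * M^6 * u^6 - 29 * N^7 * M^6 * u^7 - N^7 * M^6 * u^8 - 12 * N^8 * M * u^8 + 12 * N^8 * M * u^9 + 102 * N^8 * M^2 * u^7 - 102 * N^8 * M^2 * u^8 - 270 * N^8 * M^3 * u^6 + 210 * N^8 * M^3 * u^7 +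 60 * N^8 * M^3 * u^8 + 290 * N^8 * M^4 * u^5 - 90 * N^8 * M^4 * u^6 - 180 * N^8 * M^4 * u^7 - 20 * N^8 * M^4 * u^8 - 122 * N^8 * M^5 * u^4 - 80 * N^8 * M^5 * u^5 + 150 * N^8 * M^5 * u^6 + 50 * N^8 * M^5 * u^7 + 2 * N^8 * M^5 * u^8 + 12 * N^8 * M^6 * u^3 + 50 * N^8 * M^6 * u^4 - 30 * N^8 * M^6 * u^5 - 30 * N^8 * M^6 * u^6 - 2 * N^8 * M^6 * u^7 - N^9 * u^9 + 12 * N^9 * M * u^8 - 46 * N^9 * M^2 * u^7 - 10 * N^9 * M^2 * u^8 + 75 * N^9 * M^3 * u^6 + 50 * N^9 * M^3 * u^7 + 5 * N^9 * M^3 * u^8 - 56 * N^9 * M^4 * u^5 - 81 * N^9 * M^4 * u^6 - 21 * N^9 * M^4 * u^7 - N^9 * M^4 * u^8 + 17 * N^9 * M^5 * u^4 + 52 * N^9 * M^5 * u^5 + 27 * N^9 * M^5 * u^6 + 2 * N^9 * M^5 * u^7 - N^9 * M^6 * u^3 - 11 * N^9 * M^6 * u^4 - 11 * N^9 * M^6 * u^5 - N^9 * M^6 * u^6)"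

definition Ccp :: "'K::field \<Rightarrow> 'K \<Rightarrow> 'K \<Rightarrow> 'K" where
  "Ccp N M u = (- 2 * N^2 * M^3 * u^2 + 6 * N^2 * M^3 * u^3 - 6 * N^2 * M^3 * u^4 + 2 * N^2 * M^3 * u^5 - 5 * N^3 * M^2 * u^3 + 10 * N^3 * M^2 * u^4 - 5 * N^3 * M^2 * u^5 + 5 * N^3 * M^3 * u^2 - 10 * N^3 * M^3 * u^3 + 5 * N^3 * M^3 * u^4 - 4 * N^4 * M * u^4 + 4 * N^4 * M * u^5 + 9 * N^4 * M^2 * u^3 - 9 * N^4 * M^2 * u^4 - 4 * N^4 * M^3 * u^2 + 3 * N^4 * M^3 * u^3 + N^4 * M^3 * u^4 - N^5 * u^5 + 4 * N^5 * M * u^4 - 4 * N^5 * M^2 * u^3 - N^5 * M^2 * u^4 + N^5 * M^3 * u^2 + N^5 * M^3 * u^3)"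

definition Ddp :: "'K::field \<Rightarrow> 'K \<Rightarrow> 'K \<Rightarrow> 'K" where
  "Ddp N M u = (- 12 * N^3 * M^6 * u^3 + 72 * N^3 * M^6 * u^4 - 180 * N^3 * M^6 * u^5 + 240 * N^3 * M^6 * u^6 - 180 * N^3 * M^6 * u^7 + 72 * N^3 * M^6 * u^8 - 12 * N^3 * M^6 * u^9 - 52 * N^4 * M^5 * u^4 + 260 * N^4 * M^5 * u^5 - 520 * N^4 * M^5 * u^6 + 520 * N^4 * M^5 * u^7 - 260 * N^4 * M^5 * u^8 + 52 * N^4 * M^5 * u^9 + 52 * N^4 * M^6 * u^3 - 260 * N^4 * M^6 * u^4 + 520 * N^4 * M^6 * u^5 - 520 * N^4 * M^6 * u^6 + 260 * N^4 * M^6 * u^7 - 52 * N^4 * M^6 * u^8 - 91 * N^5 * M^4 * u^5 + 364 * N^5 * M^4 * u^6 - 546 * N^5 * M^4 * u^7 + 364 * N^5 * M^4 * u^8 - 91 * N^5 * M^4 * u^9 + 200 * N^5 * M^5 * u^4 - 800 * N^5 * M^5 * u^5 + 1200 * N^5 * M^5 * u^6 - 800 * N^5 * M^5 * u^7 + 200 * N^5 * M^5 * u^8 - 91 * N^5 * M^6 * u^3 + 346 * N^5 * M^6 * u^4 - 474 * N^5 * M^6 * u^5 + 256 * N^5 * M^6 * u^6 - 19 * N^5 * M^6 * u^7 - 18 * N^5 * M^6 * u^8 - 82 * N^6 * M^3 * u^6 + 246 * N^6 * M^3 * u^7 - 246 * N^6 * M^3 * u^8 + 82 * N^6 * M^3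 * u^9 + 299 * N^6 * M^4 * u^5 - 897 * N^6 * M^4 * u^6 + 897 * N^6 * M^4 * u^7 - 299 * N^6 * M^4 * u^8 - 301 * N^6 * M^5 * u^4 + 848 * N^6 * M^5 * u^5 - 738 * N^6 * M^5 * u^6 + 136 * N^6 * M^5 * u^7 + 55 * N^6 * M^5 * u^8 + 82 * N^6 * M^6 * u^3 - 191 * N^6 * M^6 * u^4 + 83 * N^6 * M^6 * u^5 + 77 * N^6 * M^6 * u^6 - 49 * N^6 * M^6 * u^7 - 2 * N^6 * M^6 * u^8 - 40 * N^7 * M^2 * u^7 + 80 * N^7 * M^2 * u^8 - 40 * N^7 * M^2 * u^9 + 216 * N^7 * M^3 * u^6 - 432 * N^7 * M^3 * u^7 + 216 * N^7 * M^3 * u^8 - 363 * N^7 * M^4 * u^5 + 665 * N^7 * M^4 * u^6 - 241 * N^7 * M^4 * u^7 - 61 * N^7 * M^4 * u^8 + 221 * N^7 * M^5 * u^4 - 308 * N^7 * M^5 * u^5 - 42 * N^7 * M^5 * u^6 + 124 * N^7 * M^5 * u^7 + 5 * N^7 * M^5 * u^8 - 40 * N^7 * M^6 * u^3 + 19 * N^7 * M^6 * u^4 + 71 * N^7 * M^6 * u^5 - 39 * N^7 * M^6 * u^6 - 11 * N^7 * M^6 * u^7 - 10 * N^8 * M * u^8 + 10 * N^8 * M * u^9 + 75 * N^8 * M^2 * u^7 - 75 * N^8 * M^2 * u^8 - 188 * N^8 * M^3 * u^6 + 159 * N^8 * M^3 * u^7 + 29 * N^8 * M^3 * u^8 + 193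 * N^8 * M^4 * u^5 - 87 * N^8 * M^4 * u^6 - 102 * N^8 * M^4 * u^7 - 4 * N^8 * M^4 * u^8 - 79 * N^8 * M^5 * u^4 - 28 * N^8 * M^5 * u^5 + 88 * N^8 * M^5 * u^6 + 19 * N^8 * M^5 * u^7 + 10 * N^8 * M^6 * u^3 + 19 * N^8 * M^6 * u^4 - 15 * N^8 * M^6 * u^5 - 13 * N^8 * M^6 * u^6 - N^8 * M^6 * u^7 - N^9 * u^9 + 10 * N^9 * M * u^8 - 35 * N^9 * M^2 * u^7 - 5 * N^9 * M^2 * u^8 + 54 * N^9 * M^3 * u^6 + 27 * N^9 * M^3 * u^7 + N^9 * M^3 * u^8 - 38 * N^9 * M^4 * u^5 - 45 * N^9 * M^4 * u^6 - 8 * N^9 * M^4 * u^7 + 11 * N^9 * M^5 * u^4 + 28 * N^9 * M^5 * u^5 + 12 * N^9 * M^5 * u^6 + N^9 * M^5 * u^7 - N^9 * M^6 * u^3 - 5 * N^9 * M^6 * u^4 - 5 * N^9 * M^6 * u^5 - N^9 * M^6 * u^6)"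

definition Ep :: "'K::field \<Rightarrow> 'K \<Rightarrow> 'K \<Rightarrow> 'K" where
  "Ep N M u = (4 * N^2 * M^4 * u^2 - 16 * N^2 * M^4 * u^3 + 24 * N^2 * M^4 * u^4 - 16 * N^2 * M^4 * u^5 + 4 * N^2 * M^4 * u^6 + 12 * N^3 * M^3 * u^3 - 36 * N^3 * M^3 * u^4 + 36 * N^3 * M^3 * u^5 - 12 * N^3 * M^3 * u^6 - 12 * N^3 * M^4 * u^2 + 36 * N^3 * M^4 * u^3 - 36 * N^3 * M^4 * u^4 + 12 * N^3 * M^4 * u^5 + 13 * N^4 * M^2 * u^4 - 26 * N^4 * M^2 * u^5 + 13 * N^4 * M^2 * u^6 - 30 * N^4 * M^3 * u^3 + 60 * N^4 * M^3 * u^4 - 30 * N^4 * M^3 * u^5 + 13 * N^4 * M^4 * u^2 - 22 * N^4 * M^4 * u^3 + 5 * N^4 * M^4 * u^4 + 4 * N^4 * M^4 * u^5 + 6 * N^5 * M * u^5 - 6 * N^5 * M * u^6 - 24 * N^5 * M^2 * u^4 + 24 * N^5 * M^2 * u^5 + 24 * N^5 * M^3 * u^3 - 18 * N^5 * M^3 * u^4 - 6 * N^5 * M^3 * u^5 - 6 * N^5 * M^4 * u^2 + 6 * N^5 * M^4 * u^4 + N^6 * u^6 - 6 * N^6 * M * u^5 + 11 * N^6 * M^2 * u^4 + 2 * N^6 * M^2 * u^5 - 6 * N^6 * M^3 * u^3 - 6 * N^6 * M^3 * u^4 + N^6 * M^4 * u^2 + 2 * N^6 * M^4 * u^3 + N^6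 * M^4 * u^4)"

definition Fp :: "'K::field \<Rightarrow> 'K \<Rightarrow> 'K \<Rightarrow> 'K" where
  "Fp N M u = (- 8 * N^3 * M^6 * u^3 + 48 * N^3 * M^6 * u^4 - 120 * N^3 * M^6 * u^5 + 160 * N^3 * M^6 * u^6 - 120 * N^3 * M^6 * u^7 + 48 * N^3 * M^6 * u^8 - 8 * N^3 * M^6 * u^9 - 36 * N^4 * M^5 * u^4 + 180 * N^4 * M^5 * u^5 - 360 * N^4 * M^5 * u^6 + 360 * N^4 * M^5 * u^7 - 180 * N^4 * M^5 * u^8 + 36 * N^4 * M^5 * u^9 + 36 * N^4 * M^6 * u^3 - 180 * N^4 * M^6 * u^4 + 360 * N^4 * M^6 * u^5 - 360 * N^4 * M^6 * u^6 + 180 * N^4 * M^6 * u^7 - 36 * N^4 * M^6 * u^8 - 66 * N^5 * M^4 * u^5 + 264 * N^5 * M^4 * u^6 - 396 * N^5 * M^4 * u^7 + 264 * N^5 * M^4 * u^8 - 66 * N^5 * M^4 * u^9 + 144 * N^5 * M^5 * u^4 - 576 * N^5 * M^5 * u^5 + 864 * N^5 * M^5 * u^6 - 576 * N^5 * M^5 * u^7 + 144 * N^5 * M^5 * u^8 - 66 * N^5 * M^6 * u^3 + 252 * N^5 * M^6 * u^4 - 348 * N^5 * M^6 * u^5 + 192 * N^5 * M^6 * u^6 - 18 * N^5 * M^6 * u^7 - 12 * N^5 * M^6 * u^8 - 63 * N^6 * M^3 * u^6 + 189 * N^6 * M^3 * u^7 - 189 * N^6 * M^3 * u^8 + 63 *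 N^6 * M^3 * u^9 + 225 * N^6 * M^4 * u^5 - 675 * N^6 * M^4 * u^6 + 675 * N^6 * M^4 * u^7 - 225 * N^6 * M^4 * u^8 - 225 * N^6 * M^5 * u^4 + 639 * N^6 * M^5 * u^5 - 567 * N^6 * M^5 * u^6 + 117 * N^6 * M^5 * u^7 + 36 * N^6 * M^5 * u^8 + 63 * N^6 * M^6 * u^3 - 153 * N^6 * M^6 * u^4 + 81 * N^6 * M^6 * u^5 + 45 * N^6 * M^6 * u^6 - 36 * N^6 * M^6 * u^7 - 33 * N^7 * M^2 * u^7 + 66 * N^7 * M^2 * u^8 - 33 * N^7 * M^2 * u^9 + 171 * N^7 * M^3 * u^6 - 342 * N^7 * M^3 * u^7 + 171 * N^7 * M^3 * u^8 - 282 * N^7 * M^4 * u^5 + 525 * N^7 * M^4 * u^6 - 204 * N^7 * M^4 * u^7 - 39 * N^7 * M^4 * u^8 + 171 * N^7 * M^5 * u^4 - 252 * N^7 * M^5 * u^5 - 9 * N^7 * M^5 * u^6 + 90 * N^7 * M^5 * u^7 - 33 * N^7 * M^6 * u^3 + 27 * N^7 * M^6 * u^4 + 39 * N^7 * M^6 * u^5 - 27 * N^7 * M^6 * u^6 - 6 * N^7 * M^6 * u^7 - 9 * N^8 * M * u^8 + 9 * N^8 * M * u^9 + 63 * N^8 * M^2 * u^7 - 63 * N^8 * M^2 * u^8 - 153 * N^8 * M^3 * u^6 + 135 * N^8 * M^3 * u^7 + 18 * N^8 * M^3 * u^8 + 153 * N^8 * M^4 * u^5 - 81 * N^8 * M^4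 * u^6 - 72 * N^8 * M^4 * u^7 - 63 * N^8 * M^5 * u^4 - 9 * N^8 * M^5 * u^5 + 63 * N^8 * M^5 * u^6 + 9 * N^8 * M^5 * u^7 + 9 * N^8 * M^6 * u^3 + 9 * N^8 * M^6 * u^4 - 9 * N^8 * M^6 * u^5 - 9 * N^8 * M^6 * u^6 - N^9 * u^9 + 9 * N^9 * M * u^8 - 30 * N^9 * M^2 * u^7 - 3 * N^9 * M^2 * u^8 + 45 * N^9 * M^3 * u^6 + 18 * N^9 * M^3 * u^7 - 30 * N^9 * M^4 * u^5 - 33 * N^9 * M^4 * u^6 - 3 * N^9 * M^4 * u^7 + 9 * N^9 * M^5 * u^4 + 18 * N^9 * M^5 * u^5 + 9 * N^9 * M^5 * u^6 - N^9 * M^6 * u^3 - 3 * N^9 * M^6 * u^4 - 3 * N^9 * M^6 * u^5 - N^9 * M^6 * u^6)"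

definition Gp :: "'K::field \<Rightarrow> 'K \<Rightarrow> 'K \<Rightarrow> 'K" where
  "Gp N M u = (4 * N^3 * M^6 * u^3 - 24 * N^3 * M^6 * u^4 + 60 * N^3 * M^6 * u^5 - 80 * N^3 * M^6 * u^6 + 60 * N^3 * M^6 * u^7 - 24 * N^3 * M^6 * u^8 + 4 * N^3 * M^6 * u^9 + 18 * N^4 * M^5 * u^4 - 90 * N^4 * M^5 * u^5 + 180 * N^4 * M^5 * u^6 - 180 * N^4 * M^5 * u^7 + 90 * N^4 * M^5 * u^8 - 18 * N^4 * M^5 * u^9 - 18 * N^4 * M^6 * u^3 + 90 * N^4 * M^6 * u^4 - 180 * N^4 * M^6 * u^5 + 180 * N^4 * M^6 * u^6 - 90 * N^4 * M^6 * u^7 + 18 * N^4 * M^6 * u^8 + 24 * N^5 * M^4 * u^5 - 96 * N^5 * M^4 * u^6 + 144 * N^5 * M^4 * u^7 - 96 * N^5 * M^4 * u^8 + 24 * N^5 * M^4 * u^9 - 63 * N^5 * M^5 * u^4 + 252 * N^5 * M^5 * u^5 - 378 * N^5 * M^5 * u^6 + 252 * N^5 * M^5 * u^7 - 63 * N^5 * M^5 * u^8 + 24 * N^5 * M^6 * u^3 - 81 * N^5 * M^6 * u^4 + 84 * N^5 * M^6 * u^5 - 6 * N^5 * M^6 * u^6 - 36 * N^5 * M^6 * u^7 + 15 * N^5 * M^6 * u^8 - 45 * N^6 * M^4 * u^5 + 135 * N^6 * M^4 * u^6 - 135 * N^6 * M^4 * u^7 + 45 * N^6 * M^4 * u^8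 + 45 * N^6 * M^5 * u^4 - 90 * N^6 * M^5 * u^5 + 90 * N^6 * M^5 * u^7 - 45 * N^6 * M^5 * u^8 - 45 * N^6 * M^6 * u^4 + 135 * N^6 * M^6 * u^5 - 135 * N^6 * M^6 * u^6 + 45 * N^6 * M^6 * u^7 - 24 * N^7 * M^2 * u^7 + 48 * N^7 * M^2 * u^8 - 24 * N^7 * M^2 * u^9 + 45 * N^7 * M^3 * u^6 - 90 * N^7 * M^3 * u^7 + 45 * N^7 * M^3 * u^8 - 30 * N^7 * M^4 * u^5 + 120 * N^7 * M^4 * u^6 - 150 * N^7 * M^4 * u^7 + 60 * N^7 * M^4 * u^8 + 45 * N^7 * M^5 * u^4 - 180 * N^7 * M^5 * u^5 + 225 * N^7 * M^5 * u^6 - 90 * N^7 * M^5 * u^7 - 24 * N^7 * M^6 * u^3 + 99 * N^7 * M^6 * u^4 - 150 * N^7 * M^6 * u^5 + 90 * N^7 * M^6 * u^6 - 6 * N^7 * M^6 * u^7 - 9 * N^7 * M^6 * u^8 - 18 * N^8 * M * u^8 + 18 * N^8 * M * u^9 + 63 * N^8 * M^2 * u^7 - 63 * N^8 * M^2 * u^8 - 90 * N^8 * M^3 * u^6 + 135 * N^8 * M^3 * u^7 - 45 * N^8 * M^3 * u^8 + 45 * N^8 * M^4 * u^5 - 135 * N^8 * M^4 * u^6 + 90 * N^8 * M^4 * u^7 - 63 * N^8 * M^5 * u^4 + 180 * N^8 * M^5 * u^5 - 90 * N^8 * M^5 * u^6 - 45 * N^8 * M^5 * u^7 + 18 * N^8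 * M^5 * u^8 + 18 * N^8 * M^6 * u^3 - 45 * N^8 * M^6 * u^4 + 45 * N^8 * M^6 * u^5 - 45 * N^8 * M^6 * u^6 + 27 * N^8 * M^6 * u^7 - 4 * N^9 * u^9 + 18 * N^9 * M * u^8 - 39 * N^9 * M^2 * u^7 + 15 * N^9 * M^2 * u^8 + 45 * N^9 * M^3 * u^6 - 45 * N^9 * M^3 * u^7 + 6 * N^9 * M^4 * u^5 - 24 * N^9 * M^4 * u^6 + 51 * N^9 * M^4 * u^7 - 9 * N^9 * M^4 * u^8 + 18 * N^9 * M^5 * u^4 - 72 * N^9 * M^5 * u^5 + 63 * N^9 * M^5 * u^6 - 27 * N^9 * M^5 * u^7 - 4 * N^9 * M^6 * u^3 + 6 * N^9 * M^6 * u^4 + 6 * N^9 * M^6 * u^5 - 4 * N^9 * M^6 * u^6)"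

lemma chA: "Ap N M u = Qt2 N M u * Qt2 N M u"
  unfolding Ap_def Qt2_def by (simp add: algebra_simps eval_nat_numeral)
lemma chB: "Bp N M u = Ap N M u * Qt5 N M u"
  unfolding Bp_def Ap_def Qt5_def by (simp add: algebra_simps eval_nat_numeral)
lemma chC: "Ccp N M u = Qt2 N M u * Qt3 N M u"
  unfolding Ccp_def Qt2_def Qt3_def by (simp add: algebra_simps eval_nat_numeral)
lemma chD: "Ddp N M u = Ccp N M u * Qt4 N M u"
  unfolding Ddp_def Ccp_def Qt4_def by (simp add: algebra_simps eval_nat_numeral)
lemma chE: "Ep N M u = Qt3 N M u * Qt3 N M u"
  unfolding Ep_def Qt3_def by (simp add: algebra_simps eval_nat_numeral)
lemma chF: "Fp N M u = Ep N M u * Qt3 N M u"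
  unfolding Fp_def Ep_def Qt3_def by (simp add: algebra_simps eval_nat_numeral)
lemma chG: "Gp N M u = 9 * Bp N M u - 45 * Ddp N M u + 40 * Fp N M u"
  unfolding Gp_def Bp_def Ddp_def Fp_def by (simp add: algebra_simps eval_nat_numeral)
lemma chW: "Qt2 N M u * Gp N M u = C4 N M * u^4 + C5 N M * u^5 + C6 N M * u^6 + C7 N M * u^7 + C8 N M * u^8 + C9 N M * u^9 + C10 N M * u^10 + C11 N M * u^11"
  unfolding Gp_def Qt2_def C4_def C5_def C6_def C7_def C8_def C9_def C10_def C11_def by (simp add: algebra_simps eval_nat_numeral)


definition Qh2 :: "'K::field \<Rightarrow> 'K \<Rightarrow> 'K \<Rightarrow> 'K \<Rightarrow> 'K" where
  "Qh2 N M S V = (N * M * S * V + N^2 * S^2 - N^2 * M * S * V - N^2 * M * S^2)"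

lemma Qh2_s: "Q2 N M s * V^2 = Qh2 N M (s * V) V"
  unfolding Q2_def Qh2_def by (simp add: algebra_simps eval_nat_numeral)
lemma Qh2_u: "Qh2 N M u (1 - u) = Qt2 N M u"
  unfolding Qt2_def Qh2_def by (simp add: algebra_simps eval_nat_numeral)
lemma Qt2_conv: "s * (1 - u) = u \<Longrightarrow> Q2 N M s * (1 - u)^2 = Qt2 N M u"
  using Qh2_s[of N M s "1 - u"] Qh2_u[of N M u] by simp

definition Qh3 :: "'K::field \<Rightarrow> 'K \<Rightarrow> 'K \<Rightarrow> 'K \<Rightarrow> 'K" where
  "Qh3 N M S V = (- 2 * N * M^2 * S * V^2 - 3 * N^2 * M * S^2 * V + 3 * N^2 * M^2 * S * V^2 + 3 * N^2 * M^2 * S^2 * V - N^3 * S^3 + 3 * N^3 * M * S^2 * V + 3 * N^3 * M * S^3 - N^3 * M^2 * S * V^2 - 3 * N^3 * M^2 * S^2 * V - 2 * N^3 * M^2 * S^3)"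

lemma Qh3_s: "Q3 N M s * V^3 = Qh3 N M (s * V) V"
  unfolding Q3_def Qh3_def by (simp add: algebra_simps eval_nat_numeral)
lemma Qh3_u: "Qh3 N M u (1 - u) = Qt3 N M u"
  unfolding Qt3_def Qh3_def by (simp add: algebra_simps eval_nat_numeral)
lemma Qt3_conv: "s * (1 - u) = u \<Longrightarrow> Q3 N M s * (1 - u)^3 = Qt3 N M u"
  using Qh3_s[of N M s "1 - u"] Qh3_u[of N M u] by simp

definition Qh4 :: "'K::field \<Rightarrow> 'K \<Rightarrow> 'K \<Rightarrow> 'K \<Rightarrow> 'K" where
  "Qh4 N M S V = (6 * N * M^3 * S * V^3 + 11 * N^2 * M^2 * S^2 * V^2 - 11 * N^2 * M^3 * S * V^3 - 11 * N^2 * M^3 * S^2 * V^2 + 6 * N^3 * M * S^3 * V - 18 * N^3 * M^2 * S^2 * V^2 - 18 * N^3 * M^2 * S^3 * V + 6 * N^3 * M^3 * S * V^3 + 18 * N^3 * M^3 * S^2 * V^2 + 12 * N^3 * M^3 * S^3 * V + N^4 * S^4 - 6 * N^4 * M * S^3 * V - 6 * N^4 * M * S^4 + 7 * N^4 * M^2 * S^2 * V^2 + 18 * N^4 * M^2 * S^3 * V + 11 * N^4 * M^2 * S^4 - N^4 * M^3 * S * V^3 - 7 * N^4 * M^3 * S^2 * V^2 - 12 * N^4 * M^3 * S^3 * V - 6 * N^4 * M^3 * S^4)"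

lemma Qh4_s: "Q4 N M s * V^4 = Qh4 N M (s * V) V"
  unfolding Q4_def Qh4_def by (simp add: algebra_simps eval_nat_numeral)
lemma Qh4_u: "Qh4 N M u (1 - u) = Qt4 N M u"
  unfolding Qt4_def Qh4_def by (simp add: algebra_simps eval_nat_numeral)
lemma Qt4_conv: "s * (1 - u) = u \<Longrightarrow> Q4 N M s * (1 - u)^4 = Qt4 N M u"
  using Qh4_s[of N M s "1 - u"] Qh4_u[of N M u] by simp

definition Qh5 :: "'K::field \<Rightarrow> 'K \<Rightarrow> 'K \<Rightarrow> 'K \<Rightarrow> 'K" where
  "Qh5 N M S V = (- 24 * N * M^4 * S * V^4 - 50 * N^2 * M^3 * S^2 * V^3 + 50 * N^2 * M^4 * S * V^4 + 50 * N^2 * M^4 * S^2 * V^3 - 35 * N^3 * M^2 * S^3 * V^2 + 105 * N^3 * M^3 * S^2 * V^3 + 105 * N^3 * M^3 * S^3 * V^2 - 35 * N^3 * M^4 * S * V^4 - 105 * N^3 * M^4 * S^2 * V^3 - 70 * N^3 * M^4 * S^3 * V^2 - 10 * N^4 * M * S^4 * V + 60 * N^4 * M^2 * S^3 * V^2 + 60 * N^4 * M^2 * S^4 * V - 70 * N^4 * M^3 * S^2 * V^3 - 180 * N^4 * M^3 * S^3 * V^2 - 110 * N^4 * M^3 * S^4 * V + 10 * N^4 * M^4 * S * V^4 + 70 * N^4 * M^4 * S^2 * V^3 + 120 * N^4 * M^4 * S^3 * V^2 + 60 * N^4 * M^4 * S^4 * V - N^5 * S^5 + 10 * N^5 * M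 * S^4 * V + 10 * N^5 * M * S^5 - 25 * N^5 * M^2 * S^3 * V^2 - 60 * N^5 * M^2 * S^4 * V - 35 * N^5 * M^2 * S^5 + 15 * N^5 * M^3 * S^2 * V^3 + 75 * N^5 * M^3 * S^3 * V^2 + 110 * N^5 * M^3 * S^4 * V + 50 * N^5 * M^3 * S^5 - N^5 * M^4 * S * V^4 - 15 * N^5 * M^4 * S^2 * V^3 - 50 * N^5 * M^4 * S^3 * V^2 - 60 * N^5 * M^4 * S^4 * V - 24 * N^5 * M^4 * S^5)"

lemma Qh5_s: "Q5 N M s * V^5 = Qh5 N M (s * V) V"
  unfolding Q5_def Qh5_def by (simp add: algebra_simps eval_nat_numeral)
lemma Qh5_u: "Qh5 N M u (1 - u) = Qt5 N M u"
  unfolding Qt5_def Qh5_def by (simp add: algebra_simps eval_nat_numeral)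
lemma Qt5_conv: "s * (1 - u) = u \<Longrightarrow> Q5 N M s * (1 - u)^5 = Qt5 N M u"
  using Qh5_s[of N M s "1 - u"] Qh5_u[of N M u] by simp

context derivation begin
lemma dQ1_lemma: "d N = 0 \<Longrightarrow> d M = 0 \<Longrightarrow> d (Q1 N M s) = dQ1 N M s * d s"
  unfolding Q1_def dQ1_def by (simp add: d_add d_diff d_mult d_power d_uminus algebra_simps eval_nat_numeral)
lemma dQ2_lemma: "d N = 0 \<Longrightarrow> d M = 0 \<Longrightarrow> d (Q2 N M s) = dQ2 N M s * d s"
  unfolding Q2_def dQ2_def by (simp add: d_add d_diff d_mult d_power d_uminus algebra_simps eval_nat_numeral)
lemma dQ3_lemma: "d N = 0 \<Longrightarrow> d M = 0 \<Longrightarrow> d (Q3 N M s) = dQ3 N M s * d s"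
  unfolding Q3_def dQ3_def by (simp add: d_add d_diff d_mult d_power d_uminus algebra_simps eval_nat_numeral)
lemma dQ4_lemma: "d N = 0 \<Longrightarrow> d M = 0 \<Longrightarrow> d (Q4 N M s) = dQ4 N M s * d s"
  unfolding Q4_def dQ4_def by (simp add: d_add d_diff d_mult d_power d_uminus algebra_simps eval_nat_numeral)
lemma dQ5_lemma: "d N = 0 \<Longrightarrow> d M = 0 \<Longrightarrow> d (Q5 N M s) = dQ5 N M s * d s"
  unfolding Q5_def dQ5_def by (simp add: d_add d_diff d_mult d_power d_uminus algebra_simps eval_nat_numeral)
end

lemma Q1_rec: "Q1 N M s = - of_nat 0 * M * 1 - N * s * 1 + M * N * s * (s + 1) * 0"
  unfolding Q1_def dQ1_def by (simp add: algebra_simps eval_nat_numeral)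
lemma Q2_rec: "Q2 N M s = - of_nat 1 * M * Q1 N M s - N * s * Q1 N M s + M * N * s * (s + 1) * dQ1 N M s"
  unfolding Q1_def dQ1_def Q2_def dQ2_def by (simp add: algebra_simps eval_nat_numeral)
lemma Q3_rec: "Q3 N M s = - of_nat 2 * M * Q2 N M s - N * s * Q2 N M s + M * N * s * (s + 1) * dQ2 N M s"
  unfolding Q1_def dQ1_def Q2_def dQ2_def Q3_def dQ3_def by (simp add: algebra_simps eval_nat_numeral)
lemma Q4_rec: "Q4 N M s = - of_nat 3 * M * Q3 N M s - N * s * Q3 N M s + M * N * s * (s + 1) * dQ3 N M s"
  unfolding Q1_def dQ1_def Q2_def dQ2_def Q3_def dQ3_def Q4_def dQ4_def by (simp add: algebra_simps eval_nat_numeral)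
lemma Q5_rec: "Q5 N M s = - of_nat 4 * M * Q4 N M s - N * s * Q4 N M s + M * N * s * (s + 1) * dQ4 N M s"
  unfolding Q1_def dQ1_def Q2_def dQ2_def Q3_def dQ3_def Q4_def dQ4_def Q5_def dQ5_def by (simp add: algebra_simps eval_nat_numeral)

lemma subfield_sum: "subfield k \<Longrightarrow> (\<And>j. j \<in> A \<Longrightarrow> g j \<in> k) \<Longrightarrow> sum g A \<in> k"
  by (induction A rule: infinite_finite_induct) (auto simp: subfield_zero subfield_add)

lemma transc_sum:
  fixes x :: "'K::field"
  assumes tr: "transcendental_over k x" and sub: "subfield k" and n: "n > 0"
    and cf: "\<And>j. j < L \<Longrightarrow> cf j \<in> k" and z: "(\<Sum>j<L. cf j * x ^ (n * j)) = 0"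
  shows "\<And>j. j < L \<Longrightarrow> cf j = 0"
proof -
  define f where "f = (\<Sum>j<L. monom (cf j) (n * j))"
  have pf: "poly f x = 0" using z by (simp add: f_def poly_sum poly_monom)
  have cfi: "coeff f i = (\<Sum>j<L. if n * j = i then cf j else 0)" for i
    by (simp add: f_def coeff_sum)
  have ck: "coeff f i \<in> k" for i
    unfolding cfi by (rule subfield_sum[OF sub]) (auto simp: cf subfield_zero[OF sub])
  have "set (coeffs f) \<subseteq> range (coeff f)" using range_coeff[of f] by blast
  hence "set (coeffs f) \<subseteq> k" using ck by blast
  hence "f = 0" using tr pf unfolding transcendental_over_def by blast
  fix j assume j: "j < L"
  have "coeff f (n * j) = (\<Sum>j'<L. if j' = j then cf j' else 0)"
    unfolding cfi using n by (intro sum.cong) auto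
  also have "\<dots> = cf j" using j by simp
  finally show "cf j = 0" using \<open>f = 0\<close> by simp
qed

lemma hasse_der:
  assumes "hasse_derivatives k \<tau> D" "subfield k"
  shows "derivation k (D 1)"
proof
  show "subfield k" by fact
  fix f g :: 'a
  show "D 1 (f + g) = D 1 f + D 1 g" using assms(1) unfolding hasse_derivatives_def by blast
  have "D 1 (f * g) = (\<Sum>j\<le>1. D j f * D (1 - j) g)" using assms(1) unfolding hasse_derivatives_def by blast
  also have "\<dots> = f * D 1 g + D 1 f * g" using assms(1) unfolding hasse_derivatives_def by simp
  finally show "D 1 (f * g) = f * D 1 g + D 1 f * g" .
next
  fix c assume "c \<in> k"
  thus "D 1 c = 0" using assms(1) unfolding hasse_derivatives_def by simp
qed

lemma hasse_fact:
  assumes H: "hasse_derivatives k \<tau> D" and sub: "subfield k"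
  shows "of_nat (fact i) * D i f = (D 1 ^^ i) f"
proof (induction i)
  case 0 thus ?case using H unfolding hasse_derivatives_def by simp
next
  case (Suc i)
  interpret derivation k "D 1" by (rule hasse_der[OF H sub])
  have it: "D 1 (D i f) = of_nat (Suc i) * D (Suc i) f"
    using H unfolding hasse_derivatives_def by (metis One_nat_def choose_one plus_1_eq_Suc)
  have "(D 1 ^^ Suc i) f = D 1 (of_nat (fact i) * D i f)" using Suc by simp
  also have "\<dots> = of_nat (fact i) * D 1 (D i f)" by (rule d_cmult[OF subfield_of_nat[OF sub]])
  also have "\<dots> = of_nat (fact (Suc i)) * D (Suc i) f" unfolding it by (simp add: algebra_simps)
  finally show ?case by simp
qed


context derivation begin

lemma det_curve:
  assumes dx: "d x = 1" and dN: "d N = 0" and dM: "d M = 0" and M: "M \<noteq> 0"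
    and de: "d ee = - (ee^2)" and ds: "d s = N*ee*s*(s+1)" and dy: "d y = -(N/M)*ee*s*y"
    and su: "s * (1 - u) = u" and u1: "1 - u \<noteq> 0"
  shows "det (mat 6 6 (\<lambda>(i, j). (d ^^ i) ([1, y, y^2, x, x*y, x^2] ! j))) =
    4 * y^4 * ee^11 * (C4 N M * u^4 + C5 N M * u^5 + C6 N M * u^6 + C7 N M * u^7 + C8 N M * u^8
      + C9 N M * u^9 + C10 N M * u^10 + C11 N M * u^11) / (M^11 * (1 - u)^11)"
proof -
  have stepY: "(d ^^ Suc i) y = y * ee^(Suc i) * (- of_nat i * M * Q - N * s * Q + M * N * s * (s + 1) * Q') / M^(Suc i)"
    if "(d ^^ i) y = y * ee^i * Q / M^i" "d Q = Q' * d s" for i Q Q'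
    using step[OF dN dM M de ds dy that(2), of i] that(1) by simp
  have Y0: "(d ^^ 0) y = y * ee^0 * 1 / M^0" by simp
  have Y1: "(d ^^ 1) y = y * ee^1 * Q1 N M s / M^1"
    using stepY[OF Y0, of 0] by (simp add: Q1_def)
  have Y2: "(d ^^ 2) y = y * ee^2 * Q2 N M s / M^2"
    using stepY[OF Y1 dQ1_lemma[OF dN dM]] Q2_rec[of N M s] by (simp add: numeral_2_eq_2)
  have Y3: "(d ^^ 3) y = y * ee^3 * Q3 N M s / M^3"
    using stepY[OF Y2 dQ2_lemma[OF dN dM]] Q3_rec[of N M s] by (simp add: numeral_3_eq_3)
  have e4: "(4::nat) = Suc 3" by simp
  have e5: "(5::nat) = Suc 4" by simp
  have Y4: "(d ^^ 4) y = y * ee^4 * Q4 N M s / M^4"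
    using stepY[OF Y3 dQ3_lemma[OF dN dM]] Q4_rec[of N M s] unfolding e4 by simp
  have Y5: "(d ^^ 5) y = y * ee^5 * Q5 N M s / M^5"
    using stepY[OF Y4 dQ4_lemma[OF dN dM]] Q5_rec[of N M s] unfolding e5 by simp
  define q2 where "q2 = Q2 N M s"
  define q3 where "q3 = Q3 N M s"
  define q4 where "q4 = Q4 N M s"
  define q5 where "q5 = Q5 N M s"
  have "det (mat 6 6 (\<lambda>(i, j). (d ^^ i) ([1, y, y^2, x, x*y, x^2] ! j))) =
    4 * (d ^^ 2) y * (9 * ((d ^^ 2) y)^2 * (d ^^ 5) y - 45 * (d ^^ 2) y * (d ^^ 3) y * (d ^^ 4) y
      + 40 * ((d ^^ 3) y)^3)" by (rule det_Dmat6[OF dx])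
  also have "\<dots> = 4 * y^4 * ee^11 * (q2 * (9 * q2^2 * q5 - 45 * q2 * q3 * q4 + 40 * q3^3)) / M^11"
    unfolding Y2 Y3 Y4 Y5 q2_def[symmetric] q3_def[symmetric] q4_def[symmetric] q5_def[symmetric]
    using M by (simp add: field_simps eval_nat_numeral)
  also have "q2 * (9 * q2^2 * q5 - 45 * q2 * q3 * q4 + 40 * q3^3) = Qt2 N M u * Gp N M u / (1 - u)^11"
  proof -
    define v where "v = 1 - u"
    have v0: "v \<noteq> 0" using u1 v_def by simp
    have "q2 * (9 * q2^2 * q5 - 45 * q2 * q3 * q4 + 40 * q3^3) * v^11 =
      (q2 * v^2) * (9 * (q2 * v^2)^2 * (q5 * v^5) - 45 * (q2 * v^2) * (q3 * v^3) * (q4 * v^4)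
        + 40 * (q3 * v^3)^3)"
      by (simp add: algebra_simps eval_nat_numeral)
    also have "\<dots> = Qt2 N M u * Gp N M u"
      unfolding v_def q2_def q3_def q4_def q5_def Qt2_conv[OF su] Qt3_conv[OF su] Qt4_conv[OF su] Qt5_conv[OF su]
        chG chB chA chD chC chF chE by (simp add: power2_eq_square power3_eq_cube algebra_simps)
    finally have "q2 * (9 * q2^2 * q5 - 45 * q2 * q3 * q4 + 40 * q3^3) = Qt2 N M u * Gp N M u / v^11"
      using v0 by (simp add: field_simps)
    thus ?thesis unfolding v_def .
  qed
  also note chW
  finally have fin: "det (mat 6 6 (\<lambda>(i, j). (d ^^ i) ([1, y, y^2, x, x*y, x^2] ! j))) =
      4 * y^4 * ee^11 * ((C4 N M * u^4 + C5 N M * u^5 + C6 N M * u^6 + C7 N M * u^7 + C8 N M * u^8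
      + C9 N M * u^9 + C10 N M * u^10 + C11 N M * u^11) / (1 - u)^11) / M^11" .
  define SS where "SS = C4 N M * u^4 + C5 N M * u^5 + C6 N M * u^6 + C7 N M * u^7 + C8 N M * u^8
      + C9 N M * u^9 + C10 N M * u^10 + C11 N M * u^11"
  define v where "v = 1 - u"
  have v0: "v \<noteq> 0" using u1 v_def by simp
  have "4 * y^4 * ee^11 * (SS / v^11) / M^11 = 4 * y^4 * ee^11 * SS / (M^11 * v^11)"
    using v0 M by (simp add: field_simps)
  thus ?thesis using fin unfolding SS_def[symmetric] v_def[symmetric] by simp
qed

end

lemma dvd_iff_K:
  assumes "CHAR('K::field) = p"
  shows "p dvd z \<longleftrightarrow> (of_nat z :: 'K) = 0"
  using assms by (simp add: of_nat_eq_0_iff_char_dvd)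

lemma rhs_iff:
  fixes n m p :: nat
  assumes ch: "CHAR('K::field) = p" "prime p" "p > 5" and m: "m > 2" and nm: "n \<ge> m"
  shows "((p dvd (m - 2) \<and> p dvd (n - 2)) \<or>
     (p dvd (m + 1) \<and> p dvd (n + 1)) \<or>
     (p dvd (2 * m - 1) \<and> p dvd (2 * n - 1)) \<or>
     (p dvd (m - 1) \<and> p dvd ((n - 1) * (n - 2) * (2 * n - 1) * (n + 1))) \<or>
     (p dvd (n - 1) \<and> p dvd ((m + 1) * (m - 2) * (2 * m - 1))))
   \<longleftrightarrow> GOODXY (2 * (of_nat n :: 'K)) (4 * of_nat m)"
proof -
  define N where "N = (of_nat n :: 'K)"
  define M where "M = (of_nat m :: 'K)"
  have n2: "(2::'K) \<noteq> 0" using nz_smooth[OF ch, of 1 0 0] by simp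
  have n4: "(4::'K) \<noteq> 0" using nz_smooth[OF ch, of 2 0 0] by simp
  have c2: "2 * A = 2 * B \<longleftrightarrow> A = B" for A B :: 'K using n2 by simp
  have c4: "4 * A = 4 * B \<longleftrightarrow> A = B" for A B :: 'K using n4 by simp
  have o: "of_nat (m - 2) = M - 2" "of_nat (n - 2) = N - 2" "of_nat (m - 1) = M - 1" "of_nat (n - 1) = N - 1"
    "of_nat (2 * m - 1) = 2 * M - 1" "of_nat (2 * n - 1) = 2 * N - 1"
    using m nm by (auto simp: M_def N_def of_nat_diff)
  have D: "p dvd z \<longleftrightarrow> (of_nat z :: 'K) = 0" for z using dvd_iff_K[OF ch(1)] .
  have a1: "M - 2 = 0 \<longleftrightarrow> 4 * M = 8" using c4[of M 2] by simp
  have a2: "N - 2 = 0 \<longleftrightarrow> 2 * N = 4" using c2[of N 2] by simp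
  have a3: "M + 1 = 0 \<longleftrightarrow> 4 * M = -4" using c4[of M "-1"] by (simp add: eq_neg_iff_add_eq_0)
  have a4: "N + 1 = 0 \<longleftrightarrow> 2 * N = -2" using c2[of N "-1"] by (simp add: eq_neg_iff_add_eq_0)
  have a5: "2 * M - 1 = 0 \<longleftrightarrow> 4 * M = 2" using c2[of "2 * M" 1] by simp
  have a6: "2 * N - 1 = 0 \<longleftrightarrow> 2 * N = 1" by simp
  have a7: "M - 1 = 0 \<longleftrightarrow> 4 * M = 4" using c4[of M 1] by simp
  have a8: "N - 1 = 0 \<longleftrightarrow> 2 * N = 2" using c2[of N 1] by simp
  show ?thesis
    unfolding D of_nat_mult o of_nat_add of_nat_1 M_def[symmetric] N_def[symmetric] GOODXY_def
      mult_eq_0_iff a1 a2 a3 a4 a5 a6 a7 a8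
    by auto
qed


lemma fact_nz:
  assumes ch: "CHAR('K::field) = p" "prime p" "p > 5" and i: "i < 6"
  shows "(of_nat (fact i) :: 'K) \<noteq> 0"
proof -
  have "i = 0 \<or> i = 1 \<or> i = 2 \<or> i = 3 \<or> i = 4 \<or> i = 5" using i by auto
  moreover have "(of_nat (fact 0) :: 'K) \<noteq> 0" "(of_nat (fact 1) :: 'K) \<noteq> 0" by simp_all
  moreover have "(of_nat (fact 2) :: 'K) \<noteq> 0" using nz_smooth[OF ch, of 1 0 0] by (simp add: fact_numeral)
  moreover have "(of_nat (fact 3) :: 'K) \<noteq> 0" using nz_smooth[OF ch, of 1 1 0] by (simp add: fact_numeral)
  moreover have "(of_nat (fact 4) :: 'K) \<noteq> 0" using nz_smooth[OF ch, of 3 1 0] by (simp add: fact_numeral)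
  moreover have "(of_nat (fact 5) :: 'K) \<noteq> 0" using nz_smooth[OF ch, of 3 1 1] by (simp add: fact_numeral)
  ultimately show ?thesis by (elim disjE) simp_all
qed

lemma monomials2: "monomials 2 x y = [1, y, y^2, x, x*y, x^2]"
  by (simp add: monomials_def upt_rec power2_eq_square)

theorem theorem3p5:
  fixes p h n m :: nat and k :: "'K::field set" and a b x y \<tau> :: 'K
    and D :: "nat \<Rightarrow> 'K \<Rightarrow> 'K"
  assumes "prime p" and "p > 5" and "h \<ge> 1" and "CHAR('K) = p"
    and "k = {c. \<exists>e\<ge>1. c ^ (p ^ e) = c}"
    and "algebraically_closed_subfield k"
    and "a ^ (p ^ h) = a" and "a \<noteq> 0" and "b ^ (p ^ h) = b" and "b \<noteq> 0"
    and "m > 2" and "n \<ge> m" and "\<not> p dvd (m * n)"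
    and "transcendental_over k x"
    and "a * x ^ n + b * y ^ m = 1"
    and "field_generated (k \<union> {x, y}) = UNIV"
    and "hasse_derivatives k \<tau> D"
  shows "nonclassical D (monomials 2 x y) \<longleftrightarrow>
     (p dvd (m - 2) \<and> p dvd (n - 2)) \<or>
     (p dvd (m + 1) \<and> p dvd (n + 1)) \<or>
     (p dvd (2 * m - 1) \<and> p dvd (2 * n - 1)) \<or>
     (p dvd (m - 1) \<and> p dvd ((n - 1) * (n - 2) * (2 * n - 1) * (n + 1))) \<or>
     (p dvd (n - 1) \<and> p dvd ((m + 1) * (m - 2) * (2 * m - 1)))"
proof -
  note ch = assms(4) assms(1) assms(2)
  note tr = assms(14)
  note H = assms(17)
  note rel = assms(15)
  have sub: "subfield k" using assms(6) unfolding algebraically_closed_subfield_def by blast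
  have ak: "a \<in> k" using assms(5) assms(7) assms(3) by blast
  have bk: "b \<in> k" using assms(5) assms(9) assms(3) by blast
  define N where "N = (of_nat n :: 'K)"
  define M where "M = (of_nat m :: 'K)"
  have pn: "\<not> p dvd n" and pm: "\<not> p dvd m" using assms(13) by auto
  have N0: "N \<noteq> 0" using pn ch(1) unfolding N_def by (simp add: of_nat_eq_0_iff_char_dvd)
  have M0: "M \<noteq> 0" using pm ch(1) unfolding M_def by (simp add: of_nat_eq_0_iff_char_dvd)
  have n0: "n > 0" and m0: "m > 0" using assms(11) assms(12) by auto
  obtain n' where n': "n = Suc n'" using n0 by (cases n) auto
  obtain m' where m': "m = Suc m'" using m0 by (cases m) auto
  define \<delta> where "\<delta> = D 1"
  interpret Hd: derivation k \<delta> unfolding \<delta>_def by (rule hasse_der[OF H sub])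
  have x0: "x \<noteq> 0"
  proof
    assume x: "x = 0"
    have cf: "\<And>j. j < 2 \<Longrightarrow> [0, 1] ! j \<in> k"
      using subfield_zero[OF sub] subfield_one[OF sub] by (auto simp: less_2_cases_iff)
    have z: "(\<Sum>j<2. [0, 1] ! j * x ^ (1 * j)) = 0" using x by (simp add: numeral_2_eq_2)
    have one: "(0::nat) < 1" by simp
    from transc_sum[where cf = "\<lambda>j. [0, 1] ! j" and L = 2 and n = 1, OF tr sub one cf z, of 1]
    show False by simp
  qed
  have u1: "1 - a * x ^ n \<noteq> 0"
  proof
    assume u: "1 - a * x ^ n = 0"
    have cf: "\<And>j. j < 2 \<Longrightarrow> [1, - a] ! j \<in> k"
      using subfield_one[OF sub] subfield_uminus[OF sub ak] by (auto simp: less_2_cases_iff)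
    have z: "(\<Sum>j<2. [1, - a] ! j * x ^ (n * j)) = 0" using u by (simp add: numeral_2_eq_2)
    from transc_sum[where cf = "\<lambda>j. [1, - a] ! j" and L = 2 and n = n, OF tr sub n0 cf z, of 0]
    show False by simp
  qed
  have bym: "b * y ^ m = 1 - a * x ^ n" using rel by (simp add: algebra_simps)
  have y0: "y \<noteq> 0"
  proof
    assume "y = 0"
    hence "b * y ^ m = 0" using m0 by simp
    thus False using bym u1 by simp
  qed
  have U0: "\<delta> x \<noteq> 0"
  proof
    assume dx0: "\<delta> x = 0"
    have "0 = \<delta> (a * x ^ n + b * y ^ m)" unfolding rel by (rule Hd.d_one[symmetric])
    also have "\<dots> = b * (M * y ^ (m - 1) * \<delta> y)"
      using dx0 by (simp add: Hd.d_add Hd.d_cmult[OF ak] Hd.d_cmult[OF bk] Hd.d_power M_def)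
    finally have "\<delta> y = 0" using assms(10) M0 y0 by simp
    define S where "S = {f. \<delta> f = 0}"
    have "subfield S" unfolding subfield_def S_def
    proof (intro conjI ballI)
      fix u v assume "u \<in> {f. \<delta> f = 0}" "v \<in> {f. \<delta> f = 0}"
      thus "u + v \<in> {f. \<delta> f = 0}" "u * v \<in> {f. \<delta> f = 0}"
        by (auto simp: Hd.d_add Hd.d_mult)
    next
      fix u assume u: "u \<in> {f. \<delta> f = 0}"
      thus "- u \<in> {f. \<delta> f = 0}" by (simp add: Hd.d_uminus)
      show "inverse u \<in> {f. \<delta> f = 0}" using u by (cases "u = 0") (auto simp: Hd.d_inverse)
    qed auto
    moreover have "k \<union> {x, y} \<subseteq> S" using dx0 \<open>\<delta> y = 0\<close> Hd.d_const unfolding S_def by auto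
    ultimately have "field_generated (k \<union> {x, y}) \<subseteq> S" unfolding field_generated_def by blast
    hence "\<delta> \<tau> = 0" using assms(16) unfolding S_def by auto
    thus False using H unfolding hasse_derivatives_def \<delta>_def by simp
  qed
  define U where "U = \<delta> x"
  define d where "d = (\<lambda>f. \<delta> f / U)"
  interpret Dd: derivation k d
  proof
    show "subfield k" by (rule sub)
    fix f g show "d (f + g) = d f + d g" unfolding d_def by (simp add: Hd.d_add add_divide_distrib)
    show "d (f * g) = f * d g + d f * g" unfolding d_def by (simp add: Hd.d_mult add_divide_distrib)
  next
    fix c assume "c \<in> k" thus "d c = 0" unfolding d_def by (simp add: Hd.d_const)
  qed
  have dx: "d x = 1" unfolding d_def U_def using U0 by simp
  let ?\<phi> = "monomials 2 x y"
  have len: "length ?\<phi> = 6" unfolding monomials2 by simp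
  have cls: "classical D ?\<phi> \<longleftrightarrow> det (Dmat d ?\<phi>) \<noteq> 0"
  proof (rule classical_iff_Dmat[where d = d and dl = "\<delta>" and U = U])
    show "d 0 = 0" by simp
    show "\<And>f g. d (f + g) = d f + d g" by (rule Dd.d_add)
    show "\<And>f g. d (f * g) = f * d g + d f * g" by (rule Dd.d_mult)
    show "\<And>f. \<delta> f = U * d f" unfolding d_def using U0 U_def by simp
    show "U \<noteq> 0" using U0 U_def by simp
    show "\<And>i. i < length ?\<phi> \<Longrightarrow> (of_nat (fact i) :: 'K) \<noteq> 0" using fact_nz[OF ch] len by simp
    fix i f assume "i < length ?\<phi>"
    hence "(of_nat (fact i) :: 'K) \<noteq> 0" using fact_nz[OF ch] len by simp
    thus "D i f = (\<delta> ^^ i) f / of_nat (fact i)" using hasse_fact[OF H sub, of i f] unfolding \<delta>_def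
      by (simp add: field_simps)
  qed
  have Dm: "Dmat d ?\<phi> = mat 6 6 (\<lambda>(i, j). (d ^^ i) ([1, y, y^2, x, x*y, x^2] ! j))"
    unfolding Dmat_def monomials2 by (simp add: eval_nat_numeral)
  define ee where "ee = inverse x"
  define u where "u = a * x ^ n"
  define s where "s = u / (1 - u)"
  have u1': "1 - u \<noteq> 0" using u1 unfolding u_def .
  have dN: "d N = 0" and dM: "d M = 0" unfolding N_def M_def by simp_all
  have de: "d ee = - (ee^2)" unfolding ee_def using Dd.d_inverse[OF x0] dx by (simp add: inverse_eq_divide power_one_over)
  have du: "d u = N * u * ee"
  proof -
    have "d u = a * (N * x ^ n' * 1)" unfolding u_def Dd.d_cmult[OF ak] Dd.d_power dx N_def n' by simp
    thus ?thesis unfolding u_def ee_def n' using x0 by (simp add: field_simps)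
  qed
  have ds: "d s = N*ee*s*(s+1)"
    unfolding s_def using Dd.d_divide[OF u1', of u] du u1' by (simp add: Dd.d_diff field_simps power2_eq_square)
  have dy: "d y = -(N/M)*ee*s*y"
  proof -
    have "0 = d (a * x ^ n + b * y ^ m)" unfolding rel by (rule Dd.d_one[symmetric])
    also have "\<dots> = d u + b * (M * y ^ m' * d y)"
      unfolding u_def[symmetric] Dd.d_add Dd.d_cmult[OF bk] Dd.d_power M_def m' by simp
    finally have "b * y ^ m' * (M * d y) = - (N * u * ee)" unfolding du by (simp add: algebra_simps eq_neg_iff_add_eq_0)
    note e1 = this
    have yb: "y * (b * y ^ m') = 1 - u" using bym unfolding u_def m' by (simp add: algebra_simps)
    have "(1 - u) * (M * d y) = y * (b * y ^ m' * (M * d y))" unfolding yb[symmetric] by (simp add: algebra_simps)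
    also have "\<dots> = - (N * u * ee) * y" unfolding e1 by simp
    finally have "(1 - u) * (M * d y) = - (N * u * ee) * y" .
    thus ?thesis unfolding s_def using u1' M0 by (simp add: field_simps)
  qed
  have su: "s * (1 - u) = u" unfolding s_def using u1' by simp
  define SumC where "SumC = C4 N M * u^4 + C5 N M * u^5 + C6 N M * u^6 + C7 N M * u^7 + C8 N M * u^8
      + C9 N M * u^9 + C10 N M * u^10 + C11 N M * u^11"
  have det: "det (Dmat d ?\<phi>) = 4 * y^4 * ee^11 * SumC / (M^11 * (1 - u)^11)"
    unfolding Dm SumC_def by (rule Dd.det_curve[OF dx dN dM M0 de ds dy su u1'])
  have n4: "(4::'K) \<noteq> 0" using nz_smooth[OF ch, of 2 0 0] by simp
  have ee0: "ee \<noteq> 0" unfolding ee_def using x0 by simp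
  have step1: "nonclassical D ?\<phi> \<longleftrightarrow> SumC = 0"
    unfolding nonclassical_def cls det using n4 y0 ee0 M0 u1' by simp
  define cf where "cf j = [0, 0, 0, 0, C4 N M * a^4, C5 N M * a^5, C6 N M * a^6, C7 N M * a^7,
      C8 N M * a^8, C9 N M * a^9, C10 N M * a^10, C11 N M * a^11] ! j" for j
  have sumcf: "(\<Sum>j<12. cf j * x ^ (n * j)) = SumC"
    unfolding cf_def SumC_def u_def by (simp add: eval_nat_numeral power_mult_distrib power_mult algebra_simps)
  have Nk: "N \<in> k" and Mk: "M \<in> k" unfolding N_def M_def using subfield_of_nat[OF sub] by auto
  have Ck: "C4 N M \<in> k" "C5 N M \<in> k" "C6 N M \<in> k" "C7 N M \<in> k" "C8 N M \<in> k" "C9 N M \<in> k" "C10 N M \<in> k" "C11 N M \<in> k"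
    unfolding C4_def C5_def C6_def C7_def C8_def C9_def C10_def C11_def
    using Nk Mk by (simp_all add: subfield_closed[OF sub])
  have cfk: "cf j \<in> k" if "j < 12" for j
  proof -
    let ?L = "[0, 0, 0, 0, C4 N M * a^4, C5 N M * a^5, C6 N M * a^6, C7 N M * a^7,
      C8 N M * a^8, C9 N M * a^9, C10 N M * a^10, C11 N M * a^11]"
    have "set ?L \<subseteq> k" using Ck ak by (simp add: subfield_closed[OF sub])
    moreover have "?L ! j \<in> set ?L" using that by (intro nth_mem) simp
    ultimately show ?thesis unfolding cf_def by blast
  qed
  have a0: "a ^ j \<noteq> 0" for j using assms(8) by simp
  have step2: "SumC = 0 \<longleftrightarrow> (C4 N M = 0 \<and> C5 N M = 0 \<and> C6 N M = 0 \<and> C7 N M = 0 \<and> C8 N M = 0 \<and> C9 N M = 0 \<and> C10 N M = 0 \<and> C11 N M = 0)"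
  proof
    assume "SumC = 0"
    hence z: "\<And>j. j < 12 \<Longrightarrow> cf j = 0" using transc_sum[where cf = cf and L = 12 and n = n, OF tr sub n0 cfk] sumcf by simp
    show "C4 N M = 0 \<and> C5 N M = 0 \<and> C6 N M = 0 \<and> C7 N M = 0 \<and> C8 N M = 0 \<and> C9 N M = 0 \<and> C10 N M = 0 \<and> C11 N M = 0"
      using z[of 4] z[of 5] z[of 6] z[of 7] z[of 8] z[of 9] z[of 10] z[of 11] assms(8) unfolding cf_def by simp
  next
    assume "C4 N M = 0 \<and> C5 N M = 0 \<and> C6 N M = 0 \<and> C7 N M = 0 \<and> C8 N M = 0 \<and> C9 N M = 0 \<and> C10 N M = 0 \<and> C11 N M = 0"
    thus "SumC = 0" unfolding SumC_def by simp
  qed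
  have n25: "(2::'K)^25 \<noteq> 0" using nz_smooth[OF ch, of 25 0 0] by simp
  have sc: "C4 N M = 0 \<longleftrightarrow> E4 (2*N) (4*M) = 0" "C5 N M = 0 \<longleftrightarrow> E5 (2*N) (4*M) = 0"
    "C6 N M = 0 \<longleftrightarrow> E6 (2*N) (4*M) = 0" "C7 N M = 0 \<longleftrightarrow> E7 (2*N) (4*M) = 0"
    "C8 N M = 0 \<longleftrightarrow> E8 (2*N) (4*M) = 0" "C9 N M = 0 \<longleftrightarrow> E9 (2*N) (4*M) = 0"
    "C10 N M = 0 \<longleftrightarrow> E10 (2*N) (4*M) = 0" "C11 N M = 0 \<longleftrightarrow> E11 (2*N) (4*M) = 0"
    using n25 by (simp_all only: C4_scale[symmetric] C5_scale[symmetric] C6_scale[symmetric] C7_scale[symmetric]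
      C8_scale[symmetric] C9_scale[symmetric] C10_scale[symmetric] C11_scale[symmetric] mult_eq_0_iff) simp_all
  have XY: "2 * N \<noteq> 0" "4 * M \<noteq> 0" using N0 M0 n4 nz_smooth[OF ch, of 1 0 0] by simp_all
  have step3: "(C4 N M = 0 \<and> C5 N M = 0 \<and> C6 N M = 0 \<and> C7 N M = 0 \<and> C8 N M = 0 \<and> C9 N M = 0 \<and> C10 N M = 0 \<and> C11 N M = 0)
      \<longleftrightarrow> GOODXY (2 * N) (4 * M)"
    unfolding sc nt_XY[OF ch XY, symmetric] EALL_def by (rule refl)
  have fin: "nonclassical D ?\<phi> \<longleftrightarrow> GOODXY (2 * N) (4 * M)" using step1 step2 step3 by simp
  show ?thesis using fin rhs_iff[OF ch assms(11) assms(12)] unfolding N_def M_def by simp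
qed


end
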